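(* Let $p$ be a prime, $T=\mathbb{Z}(p^\infty)$ the Prüfer $p$-group, and $A$ a countable unbounded reduced $p$-group. Then $\boldsymbol\Pi^0_3$ is the complexity class of $\{0\}$ in $\mathrm{Hom}(T,E_\omega(A))$.
   Context: $L_\omega(A)=\varprojlim_{n<\omega}A/p^nA$ (the $p$-adic completion, a Polish group), $\kappa:A\to L_\omega(A)$ canonical, $E_\omega(A)=L_\omega(A)/\kappa(A)$, a group with a Polish cover (Polish group modulo a Polishable subgroup, i.e. the image of a continuous homomorphism from a Polish group). For a countable group $T$ and $G=\hat G/N$, $\mathrm{Hom}(T,G)$ is the group of homomorphisms $T\to G$, presented as $\hat H/N_H$: $\hat H$ is the Polish group of maps $\varphi:T\to\hat G$ with $\varphi(0)=0$ and $\varphi(a+b)-\varphi(a)-\varphi(b)\in N$, where $\varphi_i\to\varphi$ iff $(\varphi_i-\varphi)(a)\to0$ in $\hat G$ and $(\varphi_i-\varphi)(a+b)-(\varphi_i-\varphi)(a)-(\varphi_i-\varphi)(b)\to0$ in $N$ (with its Polish topology) for all $a,b$; $N_H=\{\varphi:\varphi(T)\subseteq N\}$. $\boldsymbol\Pi^0_3$ is the complexity class of $\{0\}$ if $N_H$ is $\boldsymbol\Pi^0_3$ but not $\boldsymbol\Sigma^0_3$ in $\hat H$. *)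

theory Defs
  imports "HOL-Analysis.Analysis" "HOL-Library.Countable"
begin

section \<open>Abelian p-groups (type-class idiom; the group A is the whole type 'a)\<close>

definition gmult :: "nat \<Rightarrow> 'a::ab_group_add \<Rightarrow> 'a" where
  "gmult k a = (\<Sum>i<k. a)"

definition is_subgroup :: "'a::ab_group_add set \<Rightarrow> bool" where
  "is_subgroup D \<longleftrightarrow> 0 \<in> D \<and> (\<forall>x\<in>D. \<forall>y\<in>D. x + y \<in> D) \<and> (\<forall>x\<in>D. - x \<in> D)"

definition divisible_set :: "'a::ab_group_add set \<Rightarrow> bool" where
  "divisible_set D \<longleftrightarrow> (\<forall>d\<in>D. \<forall>k>0. \<exists>e\<in>D. gmult k e = d)"

definition reduced_group :: "'a::ab_group_add itself \<Rightarrow> bool" where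
  "reduced_group _ \<longleftrightarrow> (\<forall>D::'a set. is_subgroup D \<and> divisible_set D \<longrightarrow> D = {0})"

definition p_group :: "nat \<Rightarrow> 'a::ab_group_add itself \<Rightarrow> bool" where
  "p_group p _ \<longleftrightarrow> (\<forall>a::'a. \<exists>n. gmult (p ^ n) a = 0)"

definition bounded_group :: "'a::ab_group_add itself \<Rightarrow> bool" where
  "bounded_group _ \<longleftrightarrow> (\<exists>n>0. \<forall>a::'a. gmult n a = 0)"

definition pmultA :: "nat \<Rightarrow> nat \<Rightarrow> 'a::ab_group_add set" where
  "pmultA p n = range (gmult (p ^ n))"

definition pcoset :: "nat \<Rightarrow> nat \<Rightarrow> 'a::ab_group_add \<Rightarrow> 'a set" where
  "pcoset p n a = (\<lambda>b. a + b) ` pmultA p n"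

text \<open>An element of L_omega(A) is a compatible sequence of cosets x n in A/p^n A.\<close>
definition Lomega :: "nat \<Rightarrow> (nat \<Rightarrow> 'a::ab_group_add set) set" where
  "Lomega p = {x. (\<forall>n. \<exists>a. x n = pcoset p n a) \<and> (\<forall>n. x (Suc n) \<subseteq> x n)}"

definition kappa :: "nat \<Rightarrow> 'a::ab_group_add \<Rightarrow> nat \<Rightarrow> 'a set" where
  "kappa p a = (\<lambda>n. pcoset p n a)"

definition Lzero :: "nat \<Rightarrow> nat \<Rightarrow> 'a::ab_group_add set" where
  "Lzero p = kappa p 0"

definition Ldiff :: "(nat \<Rightarrow> 'a::ab_group_add set) \<Rightarrow> (nat \<Rightarrow> 'a set) \<Rightarrow> nat \<Rightarrow> 'a set" where
  "Ldiff x y = (\<lambda>n. {u - v |u v. u \<in> x n \<and> v \<in> y n})"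

text \<open>Inverse-limit topology: subspace of the product of the discrete groups A/p^n A.\<close>
definition Ltop :: "nat \<Rightarrow> (nat \<Rightarrow> 'a::ab_group_add set) topology" where
  "Ltop p = subtopology
     (product_topology (\<lambda>n. discrete_topology (range (pcoset p n))) UNIV) (Lomega p)"

definition prufer :: "nat \<Rightarrow> rat set" where
  "prufer p = {q. 0 \<le> q \<and> q < 1 \<and> (\<exists>n. q * of_nat p ^ n \<in> \<int>)}"

definition padd :: "rat \<Rightarrow> rat \<Rightarrow> rat" where
  "padd a b = frac (a + b)"

section \<open>Hom(T, E_omega(A)) presented as Hhat / N_H\<close>

definition cocyc :: "(rat \<Rightarrow> nat \<Rightarrow> 'a::ab_group_add set) \<Rightarrow> rat \<Rightarrow> rat \<Rightarrow> nat \<Rightarrow> 'a set" where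
  "cocyc \<phi> a b = Ldiff (Ldiff (\<phi> (padd a b)) (\<phi> a)) (\<phi> b)"

definition Hhat :: "nat \<Rightarrow> (rat \<Rightarrow> nat \<Rightarrow> 'a::ab_group_add set) set" where
  "Hhat p = {\<phi>. (\<forall>t\<in>prufer p. \<phi> t \<in> Lomega p) \<and> (\<forall>t. t \<notin> prufer p \<longrightarrow> \<phi> t = Lzero p)
      \<and> \<phi> 0 = Lzero p
      \<and> (\<forall>a\<in>prufer p. \<forall>b\<in>prufer p. cocyc \<phi> a b \<in> range (kappa p))}"

text \<open>Initial topology of the maps phi |-> phi(a) (into L_omega(A)) and
  phi |-> cocycle (into kappa(A) with its Polish, i.e. discrete quotient, topology).\<close>
definition Htop :: "nat \<Rightarrow> (rat \<Rightarrow> nat \<Rightarrow> 'a::ab_group_add set) topology" where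
  "Htop p = topology_generated_by
     ({Hhat p}
      \<union> {{\<phi> \<in> Hhat p. \<phi> a \<in> U} |a U. a \<in> prufer p \<and> openin (Ltop p) U}
      \<union> {{\<phi> \<in> Hhat p. cocyc \<phi> a b \<in> S} |a b S. a \<in> prufer p \<and> b \<in> prufer p \<and> S \<subseteq> range (kappa p)})"

definition NH :: "nat \<Rightarrow> (rat \<Rightarrow> nat \<Rightarrow> 'a::ab_group_add set) set" where
  "NH p = {\<phi> \<in> Hhat p. \<forall>t\<in>prufer p. \<phi> t \<in> range (kappa p)}"

section \<open>Borel hierarchy (finite levels, indexed from 1)\<close>

fun borel_sigma :: "'b topology \<Rightarrow> nat \<Rightarrow> 'b set set" where
  "borel_sigma X 0 = {}"
| "borel_sigma X (Suc 0) = {U. openin X U}"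
| "borel_sigma X (Suc (Suc n)) =
     {\<Union>(range F) |F::nat \<Rightarrow> 'b set. \<forall>i. \<exists>S\<in>borel_sigma X (Suc n). F i = topspace X - S}"

definition borel_pi :: "'b topology \<Rightarrow> nat \<Rightarrow> 'b set set" where
  "borel_pi X n = {topspace X - S |S. S \<in> borel_sigma X n}"

end

theory Submission
  imports Defs
begin

lemma gmult_0[simp]: "gmult 0 a = 0" by (simp add: gmult_def)
lemma gmult_Suc: "gmult (Suc k) a = a + gmult k a" by (simp add: gmult_def)
lemma gmult_1[simp]: "gmult 1 a = a" by (simp add: gmult_def)
lemma gmult_Suc0[simp]: "gmult (Suc 0) a = a" by (simp add: gmult_def)
lemma gmult_zero[simp]: "gmult k (0::'a::ab_group_add) = 0" by (simp add: gmult_def)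
lemma gmult_add: "gmult (m + n) a = gmult m a + gmult n a"
  by (induction m) (simp_all add: gmult_Suc add.assoc)
lemma gmult_plus: "gmult k (a + b) = gmult k a + gmult k (b::'a::ab_group_add)"
  by (induction k) (simp_all add: gmult_Suc algebra_simps)
lemma gmult_minus: "gmult k (- a) = - gmult k (a::'a::ab_group_add)"
  by (induction k) (simp_all add: gmult_Suc algebra_simps)
lemma gmult_diff: "gmult k (a - b) = gmult k a - gmult k (b::'a::ab_group_add)"
  using gmult_plus[of k a "-b"] gmult_minus[of k b] by simp
lemma gmult_mult: "gmult (m * n) a = gmult m (gmult n (a::'a::ab_group_add))"
  by (induction m) (simp_all add: gmult_Suc gmult_add gmult_plus)
lemma gmult_mult': "gmult (m * n) a = gmult n (gmult m (a::'a::ab_group_add))"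
  by (metis gmult_mult mult.commute)
lemma gmult_sum: "gmult k (sum f F) = (\<Sum>i\<in>F. gmult k (f i::'a::ab_group_add))"
  by (induction F rule: infinite_finite_induct) (simp_all add: gmult_plus)

lemma gmult_mod_eq:
  assumes "gmult q a = (0::'a::ab_group_add)" "i mod q = j mod q"
  shows "gmult i a = gmult j a"
proof -
  have "gmult i a = gmult (i mod q + (i div q) * q) a" by simp
  also have "\<dots> = gmult (i mod q) a" by (simp only: gmult_add gmult_mult assms(1)) simp
  also have "\<dots> = gmult (j mod q) a" using assms(2) by simp
  also have "\<dots> = gmult (j mod q + (j div q) * q) a" by (simp only: gmult_add gmult_mult assms(1)) simp
  finally show ?thesis by simp
qed

lemma pm_mem: "x \<in> pmultA p n \<longleftrightarrow> (\<exists>y. x = gmult (p ^ n) y)"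
  by (auto simp: pmultA_def)
lemma pm_0[simp]: "(0::'a::ab_group_add) \<in> pmultA p n"
  unfolding pm_mem by (metis gmult_zero)
lemma pm_add: "x \<in> pmultA p n \<Longrightarrow> y \<in> pmultA p n \<Longrightarrow> x + (y::'a::ab_group_add) \<in> pmultA p n"
  unfolding pm_mem by (metis gmult_plus)
lemma pm_uminus: "x \<in> pmultA p n \<Longrightarrow> - (x::'a::ab_group_add) \<in> pmultA p n"
  unfolding pm_mem by (metis gmult_minus)
lemma pm_uminus_iff: "- (x::'a::ab_group_add) \<in> pmultA p n \<longleftrightarrow> x \<in> pmultA p n"
  by (metis pm_uminus minus_minus)
lemma pm_diff: "x \<in> pmultA p n \<Longrightarrow> y \<in> pmultA p n \<Longrightarrow> x - (y::'a::ab_group_add) \<in> pmultA p n"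
  by (metis pm_add pm_uminus diff_conv_add_uminus)
lemma pm_gmult: "x \<in> pmultA p n \<Longrightarrow> gmult k (x::'a::ab_group_add) \<in> pmultA p n"
  unfolding pm_mem by (metis gmult_mult mult.commute)
lemma pm_sum: "(\<And>i. i \<in> F \<Longrightarrow> f i \<in> pmultA p n) \<Longrightarrow> sum f F \<in> (pmultA p n :: 'a::ab_group_add set)"
  by (induction F rule: infinite_finite_induct) (simp_all add: pm_add)
lemma pm_pow: "gmult (p ^ n) (x::'a::ab_group_add) \<in> pmultA p n"
  unfolding pm_mem by blast
lemma pm_pow_mult: "x \<in> pmultA p n \<Longrightarrow> gmult (p ^ m) (x::'a::ab_group_add) \<in> pmultA p (m + n)"
  unfolding pm_mem by (metis gmult_mult power_add)
lemma pm_mono: "m \<le> n \<Longrightarrow> x \<in> pmultA p n \<Longrightarrow> (x::'a::ab_group_add) \<in> pmultA p m"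
proof -
  assume "m \<le> n" "x \<in> pmultA p n"
  then obtain y where "x = gmult (p ^ n) y" unfolding pm_mem by blast
  then have "x = gmult (p ^ m) (gmult (p ^ (n - m)) y)"
    using \<open>m \<le> n\<close> by (metis gmult_mult le_add_diff_inverse power_add)
  then show ?thesis unfolding pm_mem by blast
qed
lemma pm_dvd: "p ^ j dvd e \<Longrightarrow> gmult e (x::'a::ab_group_add) \<in> pmultA p j"
  by (metis dvd_def gmult_mult pm_pow)
lemma pm_zero_UNIV[simp]: "x \<in> pmultA p 0"
  unfolding pm_mem by (metis gmult_1 power_0)

lemma pm_subgroup: "is_subgroup (pmultA p n :: 'a::ab_group_add set)"
  by (simp add: is_subgroup_def pm_add pm_uminus)

lemma mem_pcoset: "x \<in> pcoset p n a \<longleftrightarrow> x - a \<in> (pmultA p n :: 'a::ab_group_add set)"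
  unfolding pcoset_def by (auto simp: image_iff intro!: bexI[of _ "x - a"])

lemma pcoset_eq: "pcoset p n a = pcoset p n b \<longleftrightarrow> a - b \<in> (pmultA p n :: 'a::ab_group_add set)"
proof
  assume "pcoset p n a = pcoset p n b"
  then have "a \<in> pcoset p n b" using mem_pcoset[of a p n a] by simp
  then show "a - b \<in> pmultA p n" by (simp add: mem_pcoset)
next
  assume h: "a - b \<in> pmultA p n"
  show "pcoset p n a = pcoset p n b"
  proof (rule set_eqI)
    fix x
    have "x - a = (x - b) - (a - b)" "x - b = (x - a) + (a - b)" by simp_all
    then show "x \<in> pcoset p n a \<longleftrightarrow> x \<in> pcoset p n b"
      unfolding mem_pcoset using h pm_diff pm_add by metis
  qed
qed

lemma pcoset_sub: "a - b \<in> pmultA p n \<Longrightarrow> pcoset p (Suc n) a \<subseteq> pcoset p n (b::'a::ab_group_add)"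
proof
  fix x assume "a - b \<in> pmultA p n" "x \<in> pcoset p (Suc n) a"
  then have "x - a \<in> pmultA p n" unfolding mem_pcoset by (meson Suc_n_not_le_n nat_le_linear pm_mono)
  then have "(x - a) + (a - b) \<in> pmultA p n" using \<open>a - b \<in> _\<close> pm_add by blast
  then show "x \<in> pcoset p n b" by (simp add: mem_pcoset)
qed

lemma pcoset_diff: "{u - v |u v. u \<in> pcoset p n a \<and> v \<in> pcoset p n b} = pcoset p n (a - (b::'a::ab_group_add))"
proof (rule set_eqI, rule iffI)
  fix x assume "x \<in> {u - v |u v. u \<in> pcoset p n a \<and> v \<in> pcoset p n b}"
  then obtain u v where "x = u - v" "u - a \<in> pmultA p n" "v - b \<in> pmultA p n" by (auto simp: mem_pcoset)
  then have "(u - a) - (v - b) \<in> pmultA p n" by (simp add: pm_diff)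
  moreover have "(u - a) - (v - b) = x - (a - b)" using \<open>x = u - v\<close> by simp
  ultimately show "x \<in> pcoset p n (a - b)" by (simp add: mem_pcoset)
next
  fix x assume "x \<in> pcoset p n (a - b)"
  then have "x - (a - b) \<in> pmultA p n" by (simp add: mem_pcoset)
  moreover have "x = (x + b) - b" by simp
  moreover have "(x + b) - a = x - (a - b)" by simp
  ultimately show "x \<in> {u - v |u v. u \<in> pcoset p n a \<and> v \<in> pcoset p n b}"
    unfolding mem_pcoset by (metis (mono_tags, lifting) diff_self mem_Collect_eq pm_0)
qed

definition Lbad :: "nat \<Rightarrow> ('i \<Rightarrow> 'a::ab_group_add) \<Rightarrow> nat \<Rightarrow> 'i set" where
  "Lbad p c N = {i. c i \<notin> pmultA p N}"
definition Lsum :: "nat \<Rightarrow> ('i \<Rightarrow> 'a::ab_group_add) \<Rightarrow> nat \<Rightarrow> 'a set" where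
  "Lsum p c = (\<lambda>N. pcoset p N (sum c (Lbad p c N)))"
definition Lfin :: "nat \<Rightarrow> ('i \<Rightarrow> 'a::ab_group_add) \<Rightarrow> bool" where
  "Lfin p c = (\<forall>N. finite (Lbad p c N))"

lemma Lsum_eq:
  assumes "finite F" "Lbad p c N \<subseteq> F"
  shows "Lsum p c N = pcoset p N (sum c F)"
proof -
  have fb: "finite (Lbad p c N)" using assms finite_subset by blast
  have "sum c F = sum c (Lbad p c N) + sum c (F - Lbad p c N)"
    by (metis assms sum.subset_diff add.commute)
  moreover have "sum c (F - Lbad p c N) \<in> pmultA p N"
    by (rule pm_sum) (auto simp: Lbad_def)
  ultimately have "sum c (Lbad p c N) - sum c F \<in> pmultA p N"
    by (simp add: pm_uminus)
  then show ?thesis unfolding Lsum_def by (simp add: pcoset_eq)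
qed

lemma Lbad_mono: "Lbad p c N \<subseteq> Lbad p c (Suc N)"
  unfolding Lbad_def using pm_mono[of N "Suc N"] by auto

lemma Lsum_Lomega:
  assumes "Lfin p c" shows "Lsum p c \<in> Lomega p"
  unfolding Lomega_def
proof (intro CollectI conjI allI)
  fix n show "\<exists>a. Lsum p c n = pcoset p n a" by (auto simp: Lsum_def)
next
  fix n
  have "Lsum p c n = pcoset p n (sum c (Lbad p c (Suc n)))"
    using assms Lbad_mono[of p c n] by (intro Lsum_eq) (auto simp: Lfin_def)
  moreover have "Lsum p c (Suc n) \<subseteq> pcoset p n (sum c (Lbad p c (Suc n)))"
    unfolding Lsum_def by (rule pcoset_sub) simp
  ultimately show "Lsum p c (Suc n) \<subseteq> Lsum p c n" by simp
qed

lemma Lsum_kappa: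
  assumes "finite F" "\<And>i. i \<notin> F \<Longrightarrow> c i = 0"
  shows "Lsum p c = kappa p (sum c F)"
proof
  fix N
  have "Lbad p c N \<subseteq> F" using assms(2) pm_0 by (force simp: Lbad_def)
  then show "Lsum p c N = kappa p (sum c F) N" using Lsum_eq[OF assms(1)] by (simp add: kappa_def)
qed

lemma Lfin_finsupp:
  assumes "finite F" "\<And>i. i \<notin> F \<Longrightarrow> c i = 0"
  shows "Lfin p c"
proof -
  have "Lbad p c N \<subseteq> F" for N using assms(2) pm_0 by (force simp: Lbad_def)
  then show ?thesis unfolding Lfin_def using assms(1) finite_subset by blast
qed

lemma Lsum_zero: "Lsum p (\<lambda>i. 0::'a::ab_group_add) = Lzero p"
  using Lsum_kappa[of "{}" "\<lambda>i. 0::'a" p] by (simp add: Lzero_def)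

lemma kappa_Lomega: "kappa p (a::'a::ab_group_add) \<in> Lomega p"
  unfolding Lomega_def kappa_def using pcoset_sub[of a a p] by auto

lemma Lzero_Lomega: "Lzero p \<in> (Lomega p :: (nat \<Rightarrow> 'a::ab_group_add set) set)"
  unfolding Lzero_def by (rule kappa_Lomega)

lemma Lsum_diff:
  assumes "Lfin p c" "Lfin p d"
  shows "Ldiff (Lsum p c) (Lsum p d) = Lsum p (\<lambda>i. c i - d i) \<and> Lfin p (\<lambda>i. c i - d i)"
proof -
  have sub: "Lbad p (\<lambda>i. c i - d i) N \<subseteq> Lbad p c N \<union> Lbad p d N" for N
    unfolding Lbad_def using pm_diff by blast
  have fin: "finite (Lbad p c N \<union> Lbad p d N)" for N using assms by (simp add: Lfin_def)
  have "Lfin p (\<lambda>i. c i - d i)" unfolding Lfin_def using sub fin finite_subset by blast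
  moreover have "Ldiff (Lsum p c) (Lsum p d) = Lsum p (\<lambda>i. c i - d i)"
  proof
    fix N
    let ?F = "Lbad p c N \<union> Lbad p d N"
    have "Lsum p c N = pcoset p N (sum c ?F)" by (rule Lsum_eq[OF fin]) auto
    moreover have "Lsum p d N = pcoset p N (sum d ?F)" by (rule Lsum_eq[OF fin]) auto
    moreover have "Lsum p (\<lambda>i. c i - d i) N = pcoset p N (sum (\<lambda>i. c i - d i) ?F)"
      by (rule Lsum_eq[OF fin sub])
    ultimately show "Ldiff (Lsum p c) (Lsum p d) N = Lsum p (\<lambda>i. c i - d i) N"
      unfolding Ldiff_def by (simp add: pcoset_diff sum_subtractf)
  qed
  ultimately show ?thesis by blast
qed

lemma Lsum_eq_imp:
  assumes "Lfin p c" "Lfin p d" "Lsum p c = Lsum p d"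
  shows "sum (\<lambda>i. c i - d i) (Lbad p (\<lambda>i. c i - d i) N) \<in> pmultA p N"
proof -
  have "Lsum p (\<lambda>i. c i - d i) = Ldiff (Lsum p d) (Lsum p d)"
    using Lsum_diff[OF assms(1,2)] assms(3) by simp
  also have "\<dots> = Lsum p (\<lambda>i. d i - d i)" using Lsum_diff[OF assms(2,2)] by simp
  also have "\<dots> = Lzero p" using Lsum_zero by simp
  finally have "Lsum p (\<lambda>i. c i - d i) N = pcoset p N 0" by (simp add: Lzero_def kappa_def)
  then show ?thesis unfolding Lsum_def by (simp add: pcoset_eq)
qed

lemma subgroup_gmult: "is_subgroup D \<Longrightarrow> d \<in> D \<Longrightarrow> gmult k (d::'a::ab_group_add) \<in> D"
  by (induction k) (auto simp: gmult_Suc is_subgroup_def)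

lemma coprime_pow_lemma: "prime (p::nat) \<Longrightarrow> \<not> p dvd k \<Longrightarrow> coprime k (p ^ r)"
  by (metis coprime_commute coprime_power_right_iff prime_imp_coprime)

lemma divisible_p:
  assumes "prime p" "p_group p TYPE('a::ab_group_add)" "is_subgroup (D::'a set)"
    and pd: "\<forall>d\<in>D. \<exists>e\<in>D. gmult p e = d"
  shows "divisible_set D"
proof -
  have "\<forall>d\<in>D. \<exists>e\<in>D. gmult k e = d" if "k > 0" for k
    using that
  proof (induction k rule: less_induct)
    case (less k)
    show ?case
    proof (cases "p dvd k")
      case True
      then obtain k' where k': "k = p * k'" by blast
      have "p > 1" using assms(1) prime_gt_1_nat by blast
      then have "k' > 0" "k' < k" using less.prems k' by auto
      show ?thesis
      proof
        fix d assume "d \<in> D"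
        then obtain e1 where "e1 \<in> D" "gmult k' e1 = d" using less.IH \<open>k' > 0\<close> \<open>k' < k\<close> by blast
        then obtain e where "e \<in> D" "gmult p e = e1" using pd by blast
        then have "gmult k e = d" using k' \<open>gmult k' e1 = d\<close> by (simp add: gmult_mult')
        then show "\<exists>e\<in>D. gmult k e = d" using \<open>e \<in> D\<close> by blast
      qed
    next
      case False
      show ?thesis
      proof
        fix d assume "d \<in> D"
        obtain r where r: "gmult (p ^ r) d = 0" using assms(2) unfolding p_group_def by blast
        have "coprime k (p ^ r)" using coprime_pow_lemma assms(1) False by blast
        then have "gcd k (p ^ r) = 1" by simp
        then obtain x y where xy: "k * x = p ^ r * y + 1" using bezout_nat[of k "p ^ r"] less.prems by auto
        have "gmult k (gmult x d) = gmult (k * x) d" by (simp add: gmult_mult)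
        also have "\<dots> = gmult (p ^ r * y) d + d" by (simp add: xy gmult_Suc add.commute)
        also have "\<dots> = d" by (simp add: gmult_mult' r)
        finally show "\<exists>e\<in>D. gmult k e = d" using subgroup_gmult[OF assms(3) \<open>d \<in> D\<close>] by blast
      qed
    qed
  qed
  then show ?thesis unfolding divisible_set_def by blast
qed

lemma socle_exists:
  assumes "prime p" and pg: "p_group p TYPE('a::ab_group_add)" and red: "reduced_group TYPE('a)"
    and unb: "\<not> bounded_group TYPE('a)"
  shows "\<exists>H\<ge>N. \<exists>h::'a. gmult p h = 0 \<and> h \<in> pmultA p H \<and> h \<notin> pmultA p (Suc H)"
proof (rule ccontr)
  assume "\<not> ?thesis"
  then have A: "\<And>H h. N \<le> H \<Longrightarrow> gmult p h = (0::'a) \<Longrightarrow> h \<in> pmultA p H \<Longrightarrow> h \<in> pmultA p (Suc H)"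
    by blast
  have S1: "h \<in> pmultA p (N + j)" if "gmult p h = (0::'a)" "h \<in> pmultA p N" for h j
    using that by (induction j) (auto intro: A)
  have S1': "h \<in> pmultA p k" if "gmult p h = (0::'a)" "h \<in> pmultA p N" for h k
  proof (cases "k \<le> N")
    case True then show ?thesis using pm_mono that(2) by blast
  next
    case False then show ?thesis using S1[OF that, of "k - N"] by simp
  qed
  have S2: "\<forall>x::'a. x \<in> pmultA p N \<and> gmult (p ^ r) x = 0 \<longrightarrow> (\<forall>k. x \<in> pmultA p k)" for r
  proof (induction r)
    case 0 then show ?case by simp
  next
    case (Suc r)
    show ?case
    proof (intro allI impI)
      fix x k assume hx: "x \<in> pmultA p N \<and> gmult (p ^ Suc r) x = (0::'a)"
      let ?y = "gmult p x"
      have "?y \<in> pmultA p N" using hx pm_gmult by blast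
      moreover have "gmult (p ^ r) ?y = 0" using hx by (simp add: gmult_mult[symmetric] mult.commute)
      ultimately have yall: "\<forall>k. ?y \<in> pmultA p k" using Suc.IH by blast
      show "x \<in> pmultA p k"
      proof (cases "k \<le> N")
        case True then show ?thesis using pm_mono hx by blast
      next
        case False
        obtain z where z: "?y = gmult (p ^ Suc k) z" using yall pm_mem by blast
        define w where "w = x - gmult (p ^ k) z"
        have "gmult p w = ?y - gmult (p * p ^ k) z" by (simp add: w_def gmult_diff gmult_mult)
        then have w0: "gmult p w = 0" using z by simp
        have "gmult (p ^ k) z \<in> pmultA p N" using pm_mono[of N k] False pm_pow by fastforce
        then have "w \<in> pmultA p N" using hx by (simp add: w_def pm_diff)
        then have "w \<in> pmultA p k" using S1' w0 by blast
        then have "w + gmult (p ^ k) z \<in> pmultA p k" using pm_add pm_pow by blast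
        then show ?thesis by (simp add: w_def)
      qed
    qed
  qed
  have S3: "x \<in> pmultA p (Suc N)" if "x \<in> pmultA p N" for x :: 'a
  proof -
    obtain r where "gmult (p ^ r) x = 0" using pg unfolding p_group_def by blast
    then show ?thesis using S2 that by blast
  qed
  have pd: "\<forall>d\<in>pmultA p N. \<exists>e\<in>pmultA p N. gmult p e = (d::'a)"
  proof
    fix d :: 'a assume "d \<in> pmultA p N"
    then obtain z where "d = gmult (p ^ Suc N) z" using S3 pm_mem by blast
    then have "d = gmult p (gmult (p ^ N) z)" by (simp add: gmult_mult)
    then show "\<exists>e\<in>pmultA p N. gmult p e = d" using pm_pow by blast
  qed
  have "divisible_set (pmultA p N :: 'a set)"
    using divisible_p[OF assms(1) pg pm_subgroup pd] .
  then have "(pmultA p N :: 'a set) = {0}" using red pm_subgroup unfolding reduced_group_def by blast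
  then have "\<forall>a::'a. gmult (p ^ N) a = 0" using pm_pow by blast
  moreover have "p ^ N > 0" using assms(1) prime_gt_0_nat by simp
  ultimately show False using unb unfolding bounded_group_def by blast
qed

definition good :: "nat \<Rightarrow> (nat \<Rightarrow> nat) \<Rightarrow> (nat \<Rightarrow> 'a::ab_group_add) \<Rightarrow> bool" where
  "good p n g \<longleftrightarrow> strict_mono n \<and> (\<forall>k. gmult (p ^ Suc (n k)) (g k) = 0)
      \<and> (\<forall>k. gmult (p ^ n k) (g k) \<notin> pmultA p (Suc (n k)))"

lemma good_exists:
  assumes "prime p" and pg: "p_group p TYPE('a::ab_group_add)" and red: "reduced_group TYPE('a)"
    and unb: "\<not> bounded_group TYPE('a)"
  shows "\<exists>n (g::nat \<Rightarrow> 'a). good p n g"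
proof -
  have "\<forall>N. \<exists>H (g::'a). N \<le> H \<and> gmult (p ^ Suc H) g = 0 \<and> gmult (p ^ H) g \<notin> pmultA p (Suc H)"
  proof
    fix N
    obtain H h where H: "N \<le> H" "gmult p h = (0::'a)" "h \<in> pmultA p H" "h \<notin> pmultA p (Suc H)"
      using socle_exists[OF assms, of N] by blast
    obtain g where "h = gmult (p ^ H) g" using H(3) pm_mem by blast
    moreover have "gmult (p ^ Suc H) g = gmult p (gmult (p ^ H) g)" by (simp add: gmult_mult)
    ultimately show "\<exists>H (g::'a). N \<le> H \<and> gmult (p ^ Suc H) g = 0 \<and> gmult (p ^ H) g \<notin> pmultA p (Suc H)"
      using H by metis
  qed
  then obtain Hf gf where HG: "\<And>N. N \<le> Hf N" "\<And>N. gmult (p ^ Suc (Hf N)) (gf N) = (0::'a)"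
    "\<And>N. gmult (p ^ (Hf N)) (gf N) \<notin> pmultA p (Suc (Hf N))" by metis
  define a where "a = rec_nat 0 (\<lambda>_ x. Suc (Hf x))"
  have aS: "a (Suc k) = Suc (Hf (a k))" for k by (simp add: a_def)
  define n where "n k = Hf (a k)" for k
  define g where "g k = gf (a k)" for k
  have "strict_mono n"
    unfolding strict_mono_Suc_iff n_def using HG(1) aS by (metis Suc_le_lessD)
  then have "good p n g" unfolding good_def n_def g_def using HG by blast
  then show ?thesis by blast
qed

definition ecoef :: "nat \<Rightarrow> (nat \<Rightarrow> nat) \<Rightarrow> rat \<Rightarrow> nat \<Rightarrow> nat \<Rightarrow> nat" where
  "ecoef p n t m k = nat (\<lfloor>t * of_nat p ^ (n k + m + 1)\<rfloor> mod int (p ^ Suc (n k)))"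

lemma prufer_intE:
  assumes "t \<in> prufer p"
  shows "\<exists>v0. \<forall>v\<ge>v0. \<exists>z. t * of_nat p ^ v = of_int z"
proof -
  obtain v0 where "t * of_nat p ^ v0 \<in> \<int>" using assms by (auto simp: prufer_def)
  then obtain z0 where z0: "t * of_nat p ^ v0 = of_int z0" by (auto elim: Ints_cases)
  have "\<exists>z. t * of_nat p ^ v = of_int z" if "v \<ge> v0" for v
  proof -
    have "t * of_nat p ^ v = t * of_nat p ^ v0 * of_nat p ^ (v - v0)"
      using that by (simp add: power_add[symmetric])
    also have "\<dots> = of_int (z0 * int p ^ (v - v0))" by (simp add: z0)
    finally show ?thesis by blast
  qed
  then show ?thesis by blast
qed

lemma prufer_common:
  assumes "a \<in> prufer p" "b \<in> prufer p"
  shows "\<exists>v0. \<forall>v\<ge>v0. (\<exists>z. a * of_nat p ^ v = of_int z) \<and> (\<exists>z. b * of_nat p ^ v = of_int z)"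
proof -
  obtain va vb where "\<forall>v\<ge>va. \<exists>z. a * of_nat p ^ v = of_int z" "\<forall>v\<ge>vb. \<exists>z. b * of_nat p ^ v = of_int z"
    using prufer_intE assms by metis
  then show ?thesis by (intro exI[of _ "max va vb"]) auto
qed

lemma zero_prufer[simp]: "0 \<in> prufer p"
  by (auto simp: prufer_def intro!: exI[of _ 0])

lemma padd_int:
  assumes "a * of_nat p ^ v = of_int za" "b * of_nat p ^ v = of_int zb"
  shows "padd a b * of_nat p ^ v = of_int (za + zb - \<lfloor>a + b\<rfloor> * int p ^ v)"
  using assms unfolding padd_def frac_def by (simp add: algebra_simps)

lemma padd_prufer:
  assumes "a \<in> prufer p" "b \<in> prufer p"
  shows "padd a b \<in> prufer p"
proof -
  obtain v0 where "\<forall>v\<ge>v0. (\<exists>z. a * of_nat p ^ v = of_int z) \<and> (\<exists>z. b * of_nat p ^ v = of_int z)"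
    using prufer_common[OF assms] by blast
  then obtain za zb where "a * of_nat p ^ v0 = of_int za" "b * of_nat p ^ v0 = of_int zb" by blast
  then have "padd a b * of_nat p ^ v0 \<in> \<int>" using padd_int by (metis Ints_of_int)
  moreover have "0 \<le> padd a b" "padd a b < 1" by (simp_all add: padd_def frac_lt_1)
  ultimately show ?thesis unfolding prufer_def by blast
qed

lemma tM_prufer:
  assumes "p \<ge> 2"
  shows "1 / of_nat p ^ Suc M \<in> prufer p"
proof -
  have "(of_nat p :: rat) ^ Suc M > 1" using assms by (intro one_less_power) auto
  then have "1 / (of_nat p :: rat) ^ Suc M < 1" by simp
  moreover have "1 / (of_nat p :: rat) ^ Suc M * of_nat p ^ Suc M \<in> \<int>" using assms by simp
  ultimately show ?thesis unfolding prufer_def by (auto intro!: exI[of _ "Suc M"])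
qed

lemma floor_pow:
  assumes "t * of_nat p ^ v = of_int z" "v \<le> E"
  shows "\<lfloor>t * of_nat p ^ E\<rfloor> = z * int p ^ (E - v)"
proof -
  have "t * of_nat p ^ E = t * of_nat p ^ v * of_nat p ^ (E - v)"
    using assms(2) by (simp add: power_add[symmetric])
  also have "\<dots> = of_int (z * int p ^ (E - v))" by (simp add: assms(1))
  finally show ?thesis by (metis floor_of_int)
qed

lemma ecoef_form:
  assumes "p > 0" "t * of_nat p ^ v = of_int z" "v \<le> n k + m + 1"
  shows "int (ecoef p n t m k) = (z * int p ^ (n k + m + 1 - v)) mod int (p ^ Suc (n k))"
proof -
  have "int (p ^ Suc (n k)) > 0" using assms(1) by simp
  then show ?thesis
    unfolding ecoef_def floor_pow[OF assms(2,3)] by simp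
qed

lemma ecoef_pm:
  assumes "p > 0" "t * of_nat p ^ v = of_int z" "v \<le> n k + m + 1"
  shows "gmult (ecoef p n t m k) (x::'a::ab_group_add) \<in> pmultA p (n k + m + 1 - v) \<or>
         p ^ Suc (n k) dvd ecoef p n t m k"
proof -
  let ?j = "n k + m + 1 - v" and ?P = "int (p ^ Suc (n k))"
  have e: "int (ecoef p n t m k) = (z * int p ^ ?j) mod ?P" using ecoef_form[where n=n and k=k and m=m, OF assms(1,2,3)] .
  show ?thesis
  proof (cases "?j \<ge> Suc (n k)")
    case True
    then have "?P dvd z * int p ^ ?j"
      by (metis dvd_mult2 le_imp_power_dvd of_nat_dvd_iff of_nat_power order_refl dvd_mult)
    then have "ecoef p n t m k = 0" using e by simp
    then show ?thesis by simp
  next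
    case False
    have "int p ^ ?j dvd ?P" using False
      by (metis le_imp_power_dvd nat_le_linear of_nat_power)
    moreover have "int p ^ ?j dvd z * int p ^ ?j" by simp
    ultimately have "int p ^ ?j dvd (z * int p ^ ?j) mod ?P" by (simp add: dvd_mod_iff)
    then have "int (p ^ ?j) dvd int (ecoef p n t m k)" using e by simp
    then have "p ^ ?j dvd ecoef p n t m k" by (simp only: of_nat_dvd_iff)
    then show ?thesis using pm_dvd by blast
  qed
qed

lemma ecoef_pm':
  assumes "p > 0" "t * of_nat p ^ v = of_int z" "v \<le> n k + m + 1"
    and "gmult (p ^ Suc (n k)) x = 0"
  shows "gmult (ecoef p n t m k) (x::'a::ab_group_add) \<in> pmultA p (n k + m + 1 - v)"
proof -
  have "gmult (ecoef p n t m k) x = 0" if "p ^ Suc (n k) dvd ecoef p n t m k"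
    using that assms(4) by (metis dvd_def gmult_mult' gmult_zero)
  then show ?thesis using ecoef_pm[where n=n and k=k and m=m, OF assms(1-3), of x] by (metis pm_0)
qed

lemma ecoef_zero:
  assumes "p > 0" "t * of_nat p ^ v = of_int z" "v \<le> m"
  shows "ecoef p n t m k = 0"
proof -
  let ?j = "n k + m + 1 - v" and ?P = "int (p ^ Suc (n k))"
  have e: "int (ecoef p n t m k) = (z * int p ^ ?j) mod ?P" using ecoef_form[where n=n and k=k and m=m, OF assms(1,2)] assms(3) by simp
  have "?j \<ge> Suc (n k)" using assms(3) by simp
  then have "?P dvd z * int p ^ ?j"
    by (metis dvd_mult2 le_imp_power_dvd of_nat_dvd_iff of_nat_power order_refl dvd_mult)
  then show ?thesis using e by simp
qed

lemma ecoef_cocycle: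
  assumes "p > 0" "a * of_nat p ^ v = of_int za" "b * of_nat p ^ v = of_int zb" "v \<le> n k + m + 1"
  shows "ecoef p n (padd a b) m k mod p ^ Suc (n k) = (ecoef p n a m k + ecoef p n b m k) mod p ^ Suc (n k)"
proof -
  let ?j = "n k + m + 1 - v" and ?P = "int (p ^ Suc (n k))" and ?E = "n k + m + 1"
  define zc where "zc = za + zb - \<lfloor>a + b\<rfloor> * int p ^ v"
  have c: "padd a b * of_nat p ^ v = of_int zc" unfolding zc_def by (rule padd_int[OF assms(2,3)])
  have ea: "int (ecoef p n a m k) = (za * int p ^ ?j) mod ?P" using ecoef_form[where n=n and k=k and m=m, OF assms(1,2,4)] .
  have eb: "int (ecoef p n b m k) = (zb * int p ^ ?j) mod ?P" using ecoef_form[where n=n and k=k and m=m, OF assms(1,3,4)] .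
  have ec: "int (ecoef p n (padd a b) m k) = (zc * int p ^ ?j) mod ?P" using ecoef_form[where n=n and k=k and m=m, OF assms(1) c assms(4)] .
  have "zc * int p ^ ?j = za * int p ^ ?j + zb * int p ^ ?j - \<lfloor>a + b\<rfloor> * int p ^ ?E"
    using assms(4) by (simp add: zc_def algebra_simps power_add[symmetric])
  moreover have "?P dvd \<lfloor>a + b\<rfloor> * int p ^ ?E"
    by (metis dvd_mult le_imp_power_dvd of_nat_power le_add1 add_Suc_right add.commute Suc_eq_plus1
        le_add_same_cancel1 zero_le)
  ultimately have "(zc * int p ^ ?j) mod ?P = (za * int p ^ ?j + zb * int p ^ ?j) mod ?P"
    by (metis (no_types, lifting) diff_add_cancel dvd_imp_mod_0 mod_add_right_eq add_0_right)
  then have "int (ecoef p n (padd a b) m k) mod ?P = int (ecoef p n a m k + ecoef p n b m k) mod ?P"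
    using ea eb ec by (simp add: mod_add_eq)
  then show ?thesis by (metis of_nat_eq_iff zmod_int)
qed

lemma ecoef_tM:
  assumes "p \<ge> 2"
  shows "ecoef p n (1 / of_nat p ^ Suc M) M k = p ^ n k"
proof -
  have h: "(1 / of_nat p ^ Suc M) * (of_nat p :: rat) ^ Suc M = of_int 1" using assms by simp
  have "int (ecoef p n (1 / of_nat p ^ Suc M) M k) = (1 * int p ^ (n k + M + 1 - Suc M)) mod int (p ^ Suc (n k))"
    using ecoef_form[where n=n and k=k and m=M, OF _ h] assms by simp
  also have "\<dots> = int p ^ n k" using assms by (simp add: zmod_trivial_iff)
  finally show ?thesis by (metis of_nat_eq_iff of_nat_power)
qed

definition cfun :: "nat \<Rightarrow> (nat \<Rightarrow> nat) \<Rightarrow> (nat \<Rightarrow> 'a::ab_group_add) \<Rightarrow> (nat \<times> nat \<Rightarrow> bool) \<Rightarrow> rat \<Rightarrow> nat \<times> nat \<Rightarrow> 'a" where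
  "cfun p n g x t = (\<lambda>(m,k). if x (m,k) then gmult (ecoef p n t m k) (g k) else 0)"

definition Phi :: "nat \<Rightarrow> (nat \<Rightarrow> nat) \<Rightarrow> (nat \<Rightarrow> 'a::ab_group_add) \<Rightarrow> (nat \<times> nat \<Rightarrow> bool) \<Rightarrow> rat \<Rightarrow> nat \<Rightarrow> 'a set" where
  "Phi p n g x = (\<lambda>t. if t \<in> prufer p then Lsum p (cfun p n g x t) else Lzero p)"

definition box :: "nat \<Rightarrow> (nat \<times> nat) set" where
  "box v = {(m,k). m < v \<and> k < v}"

lemma finite_box[simp]: "finite (box v)"
proof -
  have "box v \<subseteq> {..<v} \<times> {..<v}" by (auto simp: box_def)
  then show ?thesis using finite_subset by blast
qed

lemma box_mono: "v \<le> w \<Longrightarrow> box v \<subseteq> box w" by (auto simp: box_def)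

lemma cfun_bad:
  assumes "good p n g" "p > 0" "t * of_nat p ^ v = of_int z"
  shows "Lbad p (cfun p n g x t) N \<subseteq> box (v + N)"
proof
  fix i assume i: "i \<in> Lbad p (cfun p n g x t) N"
  obtain m k where mk: "i = (m,k)" by fastforce
  show "i \<in> box (v + N)"
  proof (rule ccontr)
    assume "i \<notin> box (v + N)"
    then have mkb: "m \<ge> v + N \<or> k \<ge> v + N" by (auto simp: box_def mk)
    have nk: "k \<le> n k" using assms(1) strict_mono_imp_increasing unfolding good_def by blast
    then have vle: "v \<le> n k + m + 1" using mkb by auto
    have "gmult (ecoef p n t m k) (g k) \<in> pmultA p (n k + m + 1 - v)"
      using ecoef_pm'[where n=n and k=k and m=m, OF assms(2,3) vle] assms(1) unfolding good_def by blast
    moreover have "N \<le> n k + m + 1 - v" using mkb nk by auto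
    ultimately have "gmult (ecoef p n t m k) (g k) \<in> pmultA p N" using pm_mono by blast
    then have "cfun p n g x t i \<in> pmultA p N" by (simp add: cfun_def mk)
    then show False using i by (simp add: Lbad_def)
  qed
qed

lemma prufer_int1:
  assumes "t \<in> prufer p" obtains v z where "t * of_nat p ^ v = of_int z"
  using prufer_intE[OF assms] by blast

lemma Lfin_cfun:
  assumes "good p n g" "p > 0" "t \<in> prufer p"
  shows "Lfin p (cfun p n g x t)"
proof -
  obtain v z where "t * of_nat p ^ v = of_int z" using prufer_int1[OF assms(3)] by blast
  then show ?thesis unfolding Lfin_def using cfun_bad[OF assms(1,2)] finite_box finite_subset by metis
qed

lemma Phi_local:
  assumes "good p n g" "p > 0" "t \<in> prufer p"
  shows "\<exists>v. \<forall>N x x'. (\<forall>i\<in>box (v + N). x i = x' i) \<longrightarrow> Phi p n g x t N = Phi p n g x' t N"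
proof -
  obtain v z where vz: "t * of_nat p ^ v = of_int z" using prufer_int1[OF assms(3)] by blast
  have "Phi p n g x t N = Phi p n g x' t N" if "\<forall>i\<in>box (v + N). x i = x' i" for N x x'
  proof -
    have "Phi p n g x t N = pcoset p N (sum (cfun p n g x t) (box (v + N)))"
      using assms(3) Lsum_eq[OF finite_box cfun_bad[OF assms(1,2) vz]] by (simp add: Phi_def)
    moreover have "Phi p n g x' t N = pcoset p N (sum (cfun p n g x' t) (box (v + N)))"
      using assms(3) Lsum_eq[OF finite_box cfun_bad[OF assms(1,2) vz]] by (simp add: Phi_def)
    moreover have "sum (cfun p n g x t) (box (v + N)) = sum (cfun p n g x' t) (box (v + N))"
      using that by (intro sum.cong) (auto simp: cfun_def)
    ultimately show ?thesis by simp
  qed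
  then show ?thesis by blast
qed

lemma Phi_Lomega:
  assumes "good p n g" "p > 0"
  shows "Phi p n g x t \<in> Lomega p"
proof (cases "t \<in> prufer p")
  case True then show ?thesis using Lsum_Lomega[OF Lfin_cfun[OF assms True]] by (simp add: Phi_def)
next
  case False then show ?thesis using Lzero_Lomega by (simp add: Phi_def)
qed

lemma ecoef_0: "ecoef p n 0 m k = 0" by (simp add: ecoef_def)

lemma Phi_0: "Phi p n g x 0 = Lzero p"
proof -
  have "cfun p n g x 0 = (\<lambda>i. 0)" by (auto simp: cfun_def ecoef_0)
  then show ?thesis by (simp add: Phi_def Lsum_zero)
qed

lemma cocyc_form:
  assumes "good p n g" "p > 0" "a \<in> prufer p" "b \<in> prufer p"
  shows "\<exists>v. \<forall>x. cocyc (Phi p n g x) a b =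
      kappa p (sum (\<lambda>i. cfun p n g x (padd a b) i - cfun p n g x a i - cfun p n g x b i) (box v))"
proof -
  obtain v0 where v0: "\<forall>v\<ge>v0. (\<exists>z. a * of_nat p ^ v = of_int z) \<and> (\<exists>z. b * of_nat p ^ v = of_int z)"
    using prufer_common[OF assms(3,4)] by blast
  then obtain za zb where za: "a * of_nat p ^ v0 = of_int za" and zb: "b * of_nat p ^ v0 = of_int zb" by blast
  have pab: "padd a b \<in> prufer p" using padd_prufer assms by blast
  have gk: "gmult (p ^ Suc (n k)) (g k) = 0" for k using assms(1) by (simp add: good_def)
  have "cocyc (Phi p n g x) a b =
      kappa p (sum (\<lambda>i. cfun p n g x (padd a b) i - cfun p n g x a i - cfun p n g x b i) (box v0))" for x
  proof -
    have L1: "Ldiff (Lsum p (cfun p n g x (padd a b))) (Lsum p (cfun p n g x a)) =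
              Lsum p (\<lambda>i. cfun p n g x (padd a b) i - cfun p n g x a i)
          \<and> Lfin p (\<lambda>i. cfun p n g x (padd a b) i - cfun p n g x a i)"
      by (rule Lsum_diff[OF Lfin_cfun[OF assms(1,2) pab] Lfin_cfun[OF assms(1,2,3)]])
    have L2: "Ldiff (Lsum p (\<lambda>i. cfun p n g x (padd a b) i - cfun p n g x a i)) (Lsum p (cfun p n g x b)) =
              Lsum p (\<lambda>i. cfun p n g x (padd a b) i - cfun p n g x a i - cfun p n g x b i)"
      using Lsum_diff[OF conjunct2[OF L1] Lfin_cfun[OF assms(1,2,4)]] by simp
    have zero: "cfun p n g x (padd a b) i - cfun p n g x a i - cfun p n g x b i = 0" if "i \<notin> box v0" for i
    proof -
      obtain m k where mk: "i = (m,k)" by fastforce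
      have "k \<le> n k" using assms(1) strict_mono_imp_increasing unfolding good_def by blast
      then have vle: "v0 \<le> n k + m + 1" using that by (auto simp: box_def mk)
      have "ecoef p n (padd a b) m k mod p ^ Suc (n k) = (ecoef p n a m k + ecoef p n b m k) mod p ^ Suc (n k)"
        by (rule ecoef_cocycle[where n=n and k=k and m=m, OF assms(2) za zb vle])
      then have "gmult (ecoef p n (padd a b) m k) (g k) = gmult (ecoef p n a m k + ecoef p n b m k) (g k)"
        using gmult_mod_eq[OF gk] by blast
      then show ?thesis by (simp add: cfun_def mk gmult_add)
    qed
    have "cocyc (Phi p n g x) a b = Lsum p (\<lambda>i. cfun p n g x (padd a b) i - cfun p n g x a i - cfun p n g x b i)"
      using L1 L2 assms(3,4) pab by (simp add: cocyc_def Phi_def)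
    also have "\<dots> = kappa p (sum (\<lambda>i. cfun p n g x (padd a b) i - cfun p n g x a i - cfun p n g x b i) (box v0))"
      by (rule Lsum_kappa[OF finite_box zero])
    finally show ?thesis .
  qed
  then show ?thesis by blast
qed

lemma Phi_Hhat:
  assumes "good p n g" "p > 0"
  shows "Phi p n g x \<in> Hhat p"
  unfolding Hhat_def
proof (intro CollectI conjI ballI allI impI)
  fix t show "Phi p n g x t \<in> Lomega p" using Phi_Lomega[OF assms] .
next
  fix t assume "t \<notin> prufer p" then show "Phi p n g x t = Lzero p" by (simp add: Phi_def)
next
  show "Phi p n g x 0 = Lzero p" by (rule Phi_0)
next
  fix a b assume "a \<in> prufer p" "b \<in> prufer p"
  then show "cocyc (Phi p n g x) a b \<in> range (kappa p)" using cocyc_form[OF assms] by blast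
qed

definition Ytop :: "(nat \<times> nat \<Rightarrow> bool) topology" where
  "Ytop = product_topology (\<lambda>_. discrete_topology UNIV) UNIV"

lemma topspace_Ytop[simp]: "topspace Ytop = UNIV"
  by (simp add: Ytop_def)

lemma Ytop_open_local:
  assumes "\<And>x. x \<in> S \<Longrightarrow> \<exists>F. finite F \<and> (\<forall>z. (\<forall>i\<in>F. z i = x i) \<longrightarrow> z \<in> S)"
  shows "openin Ytop S"
  unfolding Ytop_def openin_product_topology_alt
proof
  fix x assume "x \<in> S"
  then obtain F where F: "finite F" "\<forall>z. (\<forall>i\<in>F. z i = x i) \<longrightarrow> z \<in> S" using assms by blast
  define U where "U i = (if i \<in> F then {x i} else UNIV)" for i
  have "{i \<in> UNIV. U i \<noteq> topspace (discrete_topology UNIV)} \<subseteq> F" by (auto simp: U_def)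
  then have "finite {i \<in> UNIV. U i \<noteq> topspace (discrete_topology UNIV)}" using F(1) finite_subset by blast
  moreover have "x \<in> Pi\<^sub>E UNIV U" by (auto simp: U_def)
  moreover have "Pi\<^sub>E UNIV U \<subseteq> S"
  proof
    fix z assume "z \<in> Pi\<^sub>E UNIV U"
    then have "\<forall>i\<in>F. z i = x i"
    proof (intro ballI)
      fix i assume "z \<in> Pi\<^sub>E UNIV U" "i \<in> F"
      then have "z i \<in> U i" using PiE_mem by blast
      then show "z i = x i" using \<open>i \<in> F\<close> by (simp add: U_def)
    qed
    then show "z \<in> S" using F(2) by blast
  qed
  ultimately show "\<exists>U. finite {i \<in> UNIV. U i \<noteq> topspace (discrete_topology UNIV)} \<and>
             (\<forall>i\<in>UNIV. openin (discrete_topology UNIV) (U i)) \<and> x \<in> Pi\<^sub>E UNIV U \<and> Pi\<^sub>E UNIV U \<subseteq> S"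
    by auto
qed

lemma Ytop_open_cyl:
  assumes "openin Ytop S" "x \<in> S"
  shows "\<exists>F. finite F \<and> (\<forall>z. (\<forall>i\<in>F. z i = x i) \<longrightarrow> z \<in> S)"
proof -
  obtain U where U: "finite {i \<in> UNIV. U i \<noteq> topspace (discrete_topology (UNIV::bool set))}"
    "x \<in> Pi\<^sub>E UNIV U" "Pi\<^sub>E UNIV U \<subseteq> S"
    using assms unfolding Ytop_def openin_product_topology_alt by blast
  define F where "F = {i \<in> UNIV. U i \<noteq> topspace (discrete_topology (UNIV::bool set))}"
  have "z \<in> S" if "\<forall>i\<in>F. z i = x i" for z
  proof -
    have "z i \<in> U i" for i
    proof (cases "i \<in> F")
      case True
      have "x i \<in> U i" using PiE_mem[OF U(2) UNIV_I] .
      then show ?thesis using that True by simp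
    next
      case False then show ?thesis by (simp add: F_def)
    qed
    then have "z \<in> Pi\<^sub>E UNIV U" by (simp add: PiE_iff)
    then show ?thesis using U(3) by blast
  qed
  then show ?thesis using U(1) unfolding F_def by blast
qed

lemma Ytop_Baire:
  assumes "countable \<G>" "\<And>T. T \<in> \<G> \<Longrightarrow> openin Ytop T"
    and "\<And>T V. T \<in> \<G> \<Longrightarrow> openin Ytop V \<Longrightarrow> V \<noteq> {} \<Longrightarrow> T \<inter> V \<noteq> {}"
  shows "\<Inter>\<G> \<noteq> {}"
proof -
  have cs: "compact_space Ytop" unfolding Ytop_def
    by (simp add: compact_space_product_topology compact_space_discrete_topology)
  have hs: "Hausdorff_space Ytop" unfolding Ytop_def
    by (simp add: Hausdorff_space_product_topology)
  have "Ytop closure_of \<Inter>\<G> = topspace Ytop"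
  proof (rule Baire_category)
    show "completely_metrizable_space Ytop \<or> locally_compact_space Ytop \<and> regular_space Ytop"
      using cs hs compact_imp_locally_compact_space compact_Hausdorff_imp_regular_space by blast
    show "countable \<G>" by fact
    fix T assume T: "T \<in> \<G>"
    have "Ytop closure_of T = topspace Ytop"
      unfolding dense_intersects_open using assms(3)[OF T] by blast
    then show "openin Ytop T \<and> Ytop closure_of T = topspace Ytop"
      using assms(2)[OF T] by blast
  qed
  then show ?thesis by (metis closure_of_empty UNIV_not_empty topspace_Ytop)
qed

lemma Phi_cont:
  assumes "good p n g" "p > 0"
  shows "continuous_map Ytop (Htop p) (Phi p n g :: _ \<Rightarrow> _ \<Rightarrow> _ \<Rightarrow> 'a::ab_group_add set)"
  unfolding Htop_def
proof (rule continuous_on_generated_topo)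
  show "Phi p n g ` topspace Ytop \<subseteq> \<Union> ({Hhat p}
      \<union> {{\<phi> \<in> Hhat p. \<phi> a \<in> U} |a U. a \<in> prufer p \<and> openin (Ltop p) U}
      \<union> {{\<phi> \<in> Hhat p. cocyc \<phi> a b \<in> S} |a b S. a \<in> prufer p \<and> b \<in> prufer p \<and> S \<subseteq> range (kappa p)})"
    using Phi_Hhat[OF assms] by auto
next
  fix U :: "(rat \<Rightarrow> nat \<Rightarrow> 'a set) set"
  assume "U \<in> {Hhat p}
      \<union> {{\<phi> \<in> Hhat p. \<phi> a \<in> U} |a U. a \<in> prufer p \<and> openin (Ltop p) U}
      \<union> {{\<phi> \<in> Hhat p. cocyc \<phi> a b \<in> S} |a b S. a \<in> prufer p \<and> b \<in> prufer p \<and> S \<subseteq> range (kappa p)}"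
  then consider "U = Hhat p"
    | a W where "a \<in> prufer p" "openin (Ltop p) W" "U = {\<phi> \<in> Hhat p. \<phi> a \<in> W}"
    | a b S where "a \<in> prufer p" "b \<in> prufer p" "U = {\<phi> \<in> Hhat p. cocyc \<phi> a b \<in> S}"
    by blast
  then show "openin Ytop (Phi p n g -` U \<inter> topspace Ytop)"
  proof cases
    case 1
    then have "Phi p n g -` U \<inter> topspace Ytop = topspace Ytop" using Phi_Hhat[OF assms] by auto
    then show ?thesis by (metis openin_topspace)
  next
    case 2
    have eq: "Phi p n g -` U \<inter> topspace Ytop = {x. Phi p n g x a \<in> W}"
      using 2(3) Phi_Hhat[OF assms] by auto
    obtain v where v: "\<And>N x x'. (\<forall>i\<in>box (v + N). x i = x' i) \<Longrightarrow> Phi p n g x a N = Phi p n g x' a N"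
      using Phi_local[OF assms 2(1)] by blast
    obtain T where T: "openin (product_topology (\<lambda>n. discrete_topology (range (pcoset p n))) UNIV) T"
        "W = T \<inter> Lomega p"
      using 2(2) unfolding Ltop_def openin_subtopology by blast
    show ?thesis unfolding eq
    proof (rule Ytop_open_local)
      fix x0 assume "x0 \<in> {x. Phi p n g x a \<in> W}"
      then have x0T: "Phi p n g x0 a \<in> T" using T(2) by simp
      have "\<exists>Uf. finite {N \<in> UNIV. Uf N \<noteq> topspace (discrete_topology (range (pcoset p N)))} \<and>
             (\<forall>N\<in>UNIV. openin (discrete_topology (range (pcoset p N))) (Uf N)) \<and>
             Phi p n g x0 a \<in> Pi\<^sub>E UNIV Uf \<and> Pi\<^sub>E UNIV Uf \<subseteq> T"
        using T(1) x0T unfolding openin_product_topology_alt by (rule bspec)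
      then obtain Uf where Uf: "finite {N \<in> UNIV. Uf N \<noteq> topspace (discrete_topology (range (pcoset p N)))}"
        "Phi p n g x0 a \<in> Pi\<^sub>E UNIV Uf" "Pi\<^sub>E UNIV Uf \<subseteq> T"
        by blast
      define J where "J = {N \<in> UNIV. Uf N \<noteq> topspace (discrete_topology (range (pcoset p N)))}"
      define F where "F = (\<Union>N\<in>J. box (v + N))"
      have "finite J" using Uf(1) unfolding J_def .
      then have "finite F" unfolding F_def by simp
      moreover have "z \<in> {x. Phi p n g x a \<in> W}" if zF: "\<forall>i\<in>F. z i = x0 i" for z
      proof -
        have same: "Phi p n g z a N = Phi p n g x0 a N" if "N \<in> J" for N
        proof (rule v)
          show "\<forall>i\<in>box (v + N). z i = x0 i" using zF that unfolding F_def by blast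
        qed
        have zL: "Phi p n g z a \<in> Lomega p" using Phi_Lomega[OF assms] .
        have "Phi p n g z a N \<in> Uf N" for N
        proof (cases "N \<in> J")
          case True
          have "Phi p n g x0 a N \<in> Uf N" using PiE_mem[OF Uf(2) UNIV_I] .
          then show ?thesis using same[OF True] by simp
        next
          case False
          then have "Uf N = range (pcoset p N)" by (simp add: J_def)
          moreover obtain a' where "Phi p n g z a N = pcoset p N a'" using zL unfolding Lomega_def by blast
          ultimately show ?thesis by simp
        qed
        then have "Phi p n g z a \<in> Pi\<^sub>E UNIV Uf" by (simp add: PiE_iff)
        then have "Phi p n g z a \<in> T" using Uf(3) by blast
        then show ?thesis using T(2) zL by simp
      qed
      ultimately show "\<exists>F. finite F \<and> (\<forall>z. (\<forall>i\<in>F. z i = x0 i) \<longrightarrow> z \<in> {x. Phi p n g x a \<in> W})"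
        by blast
    qed
  next
    case 3
    have eq: "Phi p n g -` U \<inter> topspace Ytop = {x. cocyc (Phi p n g x) a b \<in> S}"
      using 3 Phi_Hhat[OF assms] by auto
    obtain v where v: "\<And>x. cocyc (Phi p n g x) a b =
      kappa p (sum (\<lambda>i. cfun p n g x (padd a b) i - cfun p n g x a i - cfun p n g x b i) (box v))"
      using cocyc_form[OF assms 3(1,2)] by blast
    show ?thesis unfolding eq
    proof (rule Ytop_open_local)
      fix x0 assume x0: "x0 \<in> {x. cocyc (Phi p n g x) a b \<in> S}"
      have "z \<in> {x. cocyc (Phi p n g x) a b \<in> S}" if zF: "\<forall>i\<in>box v. z i = x0 i" for z
      proof -
        have "cocyc (Phi p n g z) a b = cocyc (Phi p n g x0) a b"
          unfolding v using zF by (intro arg_cong[where f="kappa p"] sum.cong) (auto simp: cfun_def)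
        then show ?thesis using x0 by simp
      qed
      then show "\<exists>F. finite F \<and> (\<forall>z. (\<forall>i\<in>F. z i = x0 i) \<longrightarrow> z \<in> {x. cocyc (Phi p n g x) a b \<in> S})"
        using finite_box by blast
    qed
  qed
qed

lemma sigma_SS_intro:
  fixes F :: "nat \<Rightarrow> 'b set"
  assumes "\<forall>i. \<exists>S\<in>borel_sigma X (Suc n). F i = topspace X - S"
  shows "\<Union>(range F) \<in> borel_sigma X (Suc (Suc n))"
  using assms unfolding borel_sigma.simps(3) mem_Collect_eq by blast

lemma sigma_SS_elim:
  assumes "S \<in> borel_sigma X (Suc (Suc n))"
  shows "\<exists>F::nat \<Rightarrow> 'b set. S = \<Union>(range F) \<and> (\<forall>i. \<exists>S\<in>borel_sigma X (Suc n). F i = topspace X - S)"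
  using assms unfolding borel_sigma.simps(3) mem_Collect_eq by blast

lemma borel_sigma_preimage:
  assumes "continuous_map X Z f"
  shows "S \<in> borel_sigma Z n \<Longrightarrow> {x \<in> topspace X. f x \<in> S} \<in> borel_sigma X n"
proof (induction n arbitrary: S)
  case 0 then show ?case by simp
next
  case (Suc n)
  show ?case
  proof (cases n)
    case 0
    then have "openin Z S" using Suc.prems by simp
    then have "openin X {x \<in> topspace X. f x \<in> S}" using assms by (simp add: continuous_map_def)
    then show ?thesis using 0 by simp
  next
    case (Suc n')
    have "S \<in> borel_sigma Z (Suc (Suc n'))" using Suc.prems \<open>n = Suc n'\<close> by simp
    then obtain F :: "nat \<Rightarrow> _" where F: "S = \<Union>(range F)" "\<forall>i. \<exists>S'\<in>borel_sigma Z (Suc n'). F i = topspace Z - S'"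
      using sigma_SS_elim by blast
    then obtain Sf where Sf: "\<And>i. Sf i \<in> borel_sigma Z (Suc n')" "\<And>i. F i = topspace Z - Sf i" by metis
    define P where "P i = {x \<in> topspace X. f x \<in> Sf i}" for i :: nat
    have P: "P i \<in> borel_sigma X (Suc n')" for i
    proof -
      have "Sf i \<in> borel_sigma Z n" using Sf(1)[of i] \<open>n = Suc n'\<close> by simp
      then have "P i \<in> borel_sigma X n" unfolding P_def by (rule Suc.IH)
      then show ?thesis using \<open>n = Suc n'\<close> by simp
    qed
    have fX: "f x \<in> topspace Z" if "x \<in> topspace X" for x
      using assms that by (simp add: continuous_map_def Pi_def)
    have eq: "{x \<in> topspace X. f x \<in> S} = \<Union>(range (\<lambda>i. topspace X - P i))"
      using fX by (auto simp: F Sf(2) P_def)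
    have "{x \<in> topspace X. f x \<in> S} \<in> borel_sigma X (Suc (Suc n'))"
      unfolding eq by (rule sigma_SS_intro) (use P in blast)
    then show ?thesis using \<open>n = Suc n'\<close> by simp
  qed
qed

lemma Lomega_sub_top: "Lomega p \<subseteq> topspace (product_topology (\<lambda>n. discrete_topology (range (pcoset p n))) UNIV)"
proof
  fix x assume "x \<in> Lomega p"
  then have "\<forall>N. \<exists>a. x N = pcoset p N a" unfolding Lomega_def by blast
  then have "\<forall>N. x N \<in> range (pcoset p N)" by (metis rangeI)
  then show "x \<in> topspace (product_topology (\<lambda>n. discrete_topology (range (pcoset p n))) UNIV)"
    by (simp add: PiE_iff)
qed

lemma topspace_Ltop: "topspace (Ltop p) = Lomega p"
  unfolding Ltop_def topspace_subtopology using Lomega_sub_top by blast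

lemma Ltop_open_compl:
  "openin (Ltop p) (Lomega p - {kappa p (a::'a::ab_group_add)})"
proof -
  have "Hausdorff_space (product_topology (\<lambda>n. discrete_topology (range (pcoset p n))) (UNIV::nat set) :: (nat \<Rightarrow> 'a set) topology)"
    by (simp add: Hausdorff_space_product_topology)
  then have "Hausdorff_space (Ltop p :: (nat \<Rightarrow> 'a set) topology)" unfolding Ltop_def
    by (rule Hausdorff_space_subtopology)
  then have "t1_space (Ltop p :: (nat \<Rightarrow> 'a set) topology)" by (rule Hausdorff_imp_t1_space)
  moreover have "kappa p a \<in> topspace (Ltop p)" using kappa_Lomega topspace_Ltop by blast
  ultimately have "closedin (Ltop p) {kappa p a}" by (rule closedin_t1_singleton)
  then have "openin (Ltop p) (topspace (Ltop p) - {kappa p a})" by (rule openin_diff[OF openin_topspace])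
  then show ?thesis by (simp only: topspace_Ltop)
qed
lemma topspace_Htop: "topspace (Htop p) = Hhat p"
  unfolding Htop_def topology_generated_by_topspace by auto

lemma upper_bound:
  "(NH p :: (rat \<Rightarrow> nat \<Rightarrow> 'a::{ab_group_add,countable} set) set) \<in> borel_pi (Htop p) 3"
proof -
  define Op where "Op t a = {\<phi> \<in> Hhat p. \<phi> t \<in> Lomega p - {kappa p (a::'a)}}" for t a
  have Oopen: "openin (Htop p) (Op t a)" if "t \<in> prufer p" for t a
  proof -
    have "Op t a \<in> {{\<phi> \<in> Hhat p. \<phi> a' \<in> U} |a' U. a' \<in> prufer p \<and> openin (Ltop p) U}"
      unfolding Op_def using that Ltop_open_compl[of p a]
      by (intro CollectI exI[of _ t] exI[of _ "Lomega p - {kappa p a}"]) simp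
    then show ?thesis unfolding Htop_def by (intro topology_generated_by_Basis UnI1 UnI2)
  qed
  define Z where "Z t = \<Union>(range (\<lambda>i. topspace (Htop p) - Op t (from_nat i)))" for t
  have Zs: "Z t \<in> borel_sigma (Htop p) 2" if "t \<in> prufer p" for t
  proof -
    have "\<forall>i. \<exists>S\<in>borel_sigma (Htop p) (Suc 0). topspace (Htop p) - Op t (from_nat i) = topspace (Htop p) - S"
    proof
      fix i :: nat
      have "Op t (from_nat i) \<in> borel_sigma (Htop p) (Suc 0)" using Oopen[OF that] by simp
      then show "\<exists>S\<in>borel_sigma (Htop p) (Suc 0). topspace (Htop p) - Op t (from_nat i) = topspace (Htop p) - S"
        by (rule bexI[rotated]) (rule refl)
    qed
    then show ?thesis unfolding Z_def numeral_2_eq_2 by (rule sigma_SS_intro)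
  qed
  have Zeq: "Z t = {\<phi> \<in> Hhat p. \<phi> t \<in> range (kappa p)}" if "t \<in> prufer p" for t
  proof (rule set_eqI, rule iffI)
    fix \<phi> :: "rat \<Rightarrow> nat \<Rightarrow> 'a set" assume "\<phi> \<in> Z t"
    then obtain i where "\<phi> \<in> Hhat p" "\<phi> \<notin> Op t (from_nat i)" unfolding Z_def topspace_Htop by blast
    moreover have "\<phi> t \<in> Lomega p" using \<open>\<phi> \<in> Hhat p\<close> that by (simp add: Hhat_def)
    ultimately show "\<phi> \<in> {\<phi> \<in> Hhat p. \<phi> t \<in> range (kappa p)}" unfolding Op_def by auto
  next
    fix \<phi> :: "rat \<Rightarrow> nat \<Rightarrow> 'a set" assume "\<phi> \<in> {\<phi> \<in> Hhat p. \<phi> t \<in> range (kappa p)}"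
    then obtain a where a: "\<phi> \<in> Hhat p" "\<phi> t = kappa p a" by blast
    obtain i where "from_nat i = a" using surj_from_nat by (metis surj_def)
    then have "\<phi> \<notin> Op t (from_nat i)" using a by (simp add: Op_def)
    then show "\<phi> \<in> Z t" unfolding Z_def topspace_Htop using a(1) by blast
  qed
  have pne: "prufer p \<noteq> {}" using zero_prufer by blast
  have pc: "countable (prufer p)" by (rule countableI_type)
  define T where "T j = from_nat_into (prufer p) j" for j
  have T: "T j \<in> prufer p" for j unfolding T_def by (rule from_nat_into[OF pne])
  have rT: "range T = prufer p" unfolding T_def by (rule range_from_nat_into[OF pne pc])
  define S3 where "S3 = \<Union>(range (\<lambda>j. topspace (Htop p) - Z (T j)))"
  have ZT: "\<forall>j. \<exists>S\<in>borel_sigma (Htop p) (Suc (Suc 0)). topspace (Htop p) - Z (T j) = topspace (Htop p) - S"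
  proof
    fix j
    have "Z (T j) \<in> borel_sigma (Htop p) (Suc (Suc 0))" using Zs[OF T[of j]] by (simp only: numeral_2_eq_2)
    then show "\<exists>S\<in>borel_sigma (Htop p) (Suc (Suc 0)). topspace (Htop p) - Z (T j) = topspace (Htop p) - S"
      by (rule bexI[rotated]) (rule refl)
  qed
  have "S3 \<in> borel_sigma (Htop p) 3"
    unfolding S3_def numeral_3_eq_3 by (rule sigma_SS_intro[OF ZT])
  moreover have "NH p = topspace (Htop p) - S3"
  proof (rule set_eqI)
    fix \<phi>
    have "\<phi> \<in> topspace (Htop p) - S3 \<longleftrightarrow> \<phi> \<in> Hhat p \<and> (\<forall>j. \<phi> \<in> Z (T j))"
      unfolding S3_def topspace_Htop by blast
    also have "\<dots> \<longleftrightarrow> \<phi> \<in> Hhat p \<and> (\<forall>j. \<phi> (T j) \<in> range (kappa p))"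
      by (simp add: Zeq[OF T])
    also have "\<dots> \<longleftrightarrow> \<phi> \<in> Hhat p \<and> (\<forall>t\<in>prufer p. \<phi> t \<in> range (kappa p))"
      by (auto simp: rT[symmetric])
    also have "\<dots> \<longleftrightarrow> \<phi> \<in> NH p" unfolding NH_def by blast
    finally show "\<phi> \<in> NH p \<longleftrightarrow> \<phi> \<in> topspace (Htop p) - S3" by blast
  qed
  ultimately show ?thesis unfolding borel_pi_def by (intro CollectI exI[of _ S3] conjI)
qed

definition agree :: "nat \<Rightarrow> (nat \<times> nat \<Rightarrow> bool) \<Rightarrow> (nat \<times> nat \<Rightarrow> bool) \<Rightarrow> bool" where
  "agree M s x \<longleftrightarrow> (\<forall>m<M. \<forall>k. x (m,k) = s (m,k))"
definition fincol :: "nat \<Rightarrow> (nat \<times> nat \<Rightarrow> bool) \<Rightarrow> bool" where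
  "fincol M s \<longleftrightarrow> (\<forall>m<M. finite {k. s (m,k)})"

lemma fin_in_NH:
  assumes "good p n g" "p > 0" "\<forall>m. finite {k. x (m,k)}"
  shows "Phi p n g x \<in> NH p"
proof -
  have "Phi p n g x t \<in> range (kappa p)" if t: "t \<in> prufer p" for t
  proof -
    obtain v z where vz: "t * of_nat p ^ v = of_int z" using prufer_int1[OF t] by blast
    define F where "F = (\<Union>m<v. {m} \<times> {k. x (m,k)})"
    have "finite F" unfolding F_def using assms(3) by auto
    moreover have "cfun p n g x t i = 0" if "i \<notin> F" for i
    proof -
      obtain m k where mk: "i = (m,k)" by fastforce
      show ?thesis
      proof (cases "m < v")
        case True then have "\<not> x (m,k)" using that by (auto simp: F_def mk)
        then show ?thesis by (simp add: cfun_def mk)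
      next
        case False then have "ecoef p n t m k = 0"
          using ecoef_zero[where n=n and k=k and m=m, OF assms(2) vz] by simp
        then show ?thesis by (simp add: cfun_def mk)
      qed
    qed
    ultimately have "Lsum p (cfun p n g x t) = kappa p (sum (cfun p n g x t) F)" by (rule Lsum_kappa)
    then show ?thesis using t by (simp add: Phi_def)
  qed
  then show ?thesis unfolding NH_def using Phi_Hhat[OF assms(1,2)] by blast
qed

lemma K_countable:
  fixes g :: "nat \<Rightarrow> 'a::{ab_group_add,countable}"
  assumes gd: "good p n g" "p \<ge> 2"
  shows "countable {y. \<exists>x. agree M s x \<and> (\<lambda>k. x (M,k)) = y \<and>
            Phi p n g x (1 / of_nat p ^ Suc M) \<in> range (kappa p)}"
proof -
  define t where "t = 1 / (of_nat p :: rat) ^ Suc M"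
  have p0: "p > 0" using assms(2) by simp
  have tP: "t \<in> prufer p" unfolding t_def using tM_prufer[OF assms(2)] .
  have tz: "t * of_nat p ^ Suc M = of_int 1" using assms(2) by (simp add: t_def)
  define xy where "xy y = (\<lambda>(m,k). if m < M then s (m,k) else if m = M then y k else False)" for y
  have same: "Phi p n g x t = Phi p n g (xy y) t" if xa: "agree M s x" "(\<lambda>k. x (M,k)) = y" for x y
  proof -
    have "cfun p n g x t = cfun p n g (xy y) t"
    proof (rule ext)
      fix i :: "nat \<times> nat"
      obtain m k where mk: "i = (m,k)" by fastforce
      show "cfun p n g x t i = cfun p n g (xy y) t i"
      proof (cases "m \<le> M")
        case True
        have "x (m,k) = xy y (m,k)"
        proof (cases "m < M")
          case True then show ?thesis using xa(1) by (simp add: xy_def agree_def)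
        next
          case False
          then have "m = M" using \<open>m \<le> M\<close> by simp
          then show ?thesis using xa(2) by (auto simp: xy_def)
        qed
        then show ?thesis by (simp add: cfun_def mk)
      next
        case False
        then have "ecoef p n t m k = 0" using ecoef_zero[where n=n and k=k and m=m, OF p0 tz] by simp
        then show ?thesis by (simp add: cfun_def mk)
      qed
    qed
    then show ?thesis using tP by (simp add: Phi_def)
  qed
  define h where "h k = gmult (p ^ n k) (g k)" for k
  have ecM: "ecoef p n t M k = p ^ n k" for k unfolding t_def by (rule ecoef_tM[OF assms(2)])
  have inj: "inj (\<lambda>y. Phi p n g (xy y) t)"
  proof (rule injI)
    fix y y' assume eq: "Phi p n g (xy y) t = Phi p n g (xy y') t"
    show "y = y'"
    proof (rule ccontr)
      assume "y \<noteq> y'"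
      then have ex: "\<exists>k. y k \<noteq> y' k" by auto
      define k0 where "k0 = (LEAST k. y k \<noteq> y' k)"
      have k0: "y k0 \<noteq> y' k0" using LeastI_ex[OF ex] k0_def by simp
      have lt: "y k = y' k" if "k < k0" for k using not_less_Least[of k "\<lambda>k. y k \<noteq> y' k"] that k0_def by auto
      define c where "c = cfun p n g (xy y) t"
      define c' where "c' = cfun p n g (xy y') t"
      define d where "d i = c i - c' i" for i
      define N where "N = Suc (n k0)"
      have fc: "Lfin p c" "Lfin p c'" unfolding c_def c'_def using Lfin_cfun[OF assms(1) p0 tP] by blast+
      have "Lsum p c = Lsum p c'" using eq tP by (simp add: Phi_def c_def c'_def)
      then have sumN: "sum d (Lbad p d N) \<in> pmultA p N" unfolding d_def using Lsum_eq_imp[OF fc] by blast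
      have dval: "d (m,k) = (if m = M then (if y k then h k else 0) - (if y' k then h k else 0) else 0)" for m k
      proof (cases "m < M")
        case True then show ?thesis by (simp add: d_def c_def c'_def cfun_def xy_def)
      next
        case False
        show ?thesis
        proof (cases "m = M")
          case True then show ?thesis by (simp add: d_def c_def c'_def cfun_def xy_def ecM h_def)
        next
          case False2: False
          then show ?thesis using False by (simp add: d_def c_def c'_def cfun_def xy_def)
        qed
      qed
      have hk0: "h k0 \<notin> pmultA p N" using assms(1) by (simp add: good_def h_def N_def)
      have d0: "d (M,k0) = h k0 \<or> d (M,k0) = - h k0" using dval[of M k0] k0 by (cases "y k0") auto
      have bad: "Lbad p d N = {(M,k0)}"
      proof (rule set_eqI)
        fix i :: "nat \<times> nat"
        obtain m k where mk: "i = (m,k)" by fastforce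
        show "i \<in> Lbad p d N \<longleftrightarrow> i \<in> {(M,k0)}"
        proof (cases "m = M \<and> y k \<noteq> y' k")
          case False
          then have "d (m,k) = 0" using dval[of m k] by auto
          moreover have "i \<noteq> (M,k0)" using False k0 mk by auto
          ultimately show ?thesis by (simp add: Lbad_def mk)
        next
          case True
          then have dk: "d (m,k) = h k \<or> d (m,k) = - h k" using dval[of m k] by (cases "y k") auto
          consider "k < k0" | "k = k0" | "k0 < k" by linarith
          then show ?thesis
          proof cases
            case 1 then show ?thesis using lt True by blast
          next
            case 2
            have "d (m,k) \<notin> pmultA p N" using dk hk0 2 pm_uminus_iff by metis
            then show ?thesis using 2 True mk by (simp add: Lbad_def)
          next
            case 3
            have "n k0 < n k" using assms(1) 3 unfolding good_def strict_mono_def by blast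
            have "h k \<in> pmultA p N" unfolding h_def N_def by (rule pm_mono[OF Suc_leI[OF \<open>n k0 < n k\<close>] pm_pow])
            then have "d (m,k) \<in> pmultA p N" using dk pm_uminus[of "h k" p N] by auto
            moreover have "i \<noteq> (M,k0)" using 3 mk by auto
            ultimately show ?thesis by (simp add: Lbad_def mk)
          qed
        qed
      qed
      have "d (M,k0) \<in> pmultA p N" using sumN bad by simp
      then show False using d0 hk0 pm_uminus_iff by metis
    qed
  qed
  have sub: "{y. \<exists>x. agree M s x \<and> (\<lambda>k. x (M,k)) = y \<and> Phi p n g x t \<in> range (kappa p)}
      \<subseteq> {y. Phi p n g (xy y) t \<in> range (kappa p)}"
  proof
    fix y assume "y \<in> {y. \<exists>x. agree M s x \<and> (\<lambda>k. x (M,k)) = y \<and> Phi p n g x t \<in> range (kappa p)}"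
    then obtain x where "agree M s x" "(\<lambda>k. x (M,k)) = y" "Phi p n g x t \<in> range (kappa p)" by blast
    then have "Phi p n g (xy y) t \<in> range (kappa p)" using same by metis
    then show "y \<in> {y. Phi p n g (xy y) t \<in> range (kappa p)}" by simp
  qed
  have ck: "countable (range (kappa p :: 'a \<Rightarrow> _))" by (rule countable_image) (rule countableI_type)
  have "countable {y. Phi p n g (xy y) t \<in> range (kappa p)}"
  proof (rule countable_image_inj_on)
    show "countable ((\<lambda>y. Phi p n g (xy y) t) ` {y. Phi p n g (xy y) t \<in> range (kappa p)})"
      by (rule countable_subset[OF _ ck]) blast
    show "inj_on (\<lambda>y. Phi p n g (xy y) t) {y. Phi p n g (xy y) t \<in> range (kappa p)}"
      using inj by (simp add: inj_on_def)
  qed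
  then have "countable {y. \<exists>x. agree M s x \<and> (\<lambda>k. x (M,k)) = y \<and> Phi p n g x t \<in> range (kappa p)}"
    using sub by (rule countable_subset[rotated])
  then show ?thesis by (simp only: t_def)
qed

lemma avoid:
  fixes g :: "nat \<Rightarrow> 'a::{ab_group_add,countable}"
    and Op :: "'j \<Rightarrow> nat \<Rightarrow> (nat \<times> nat \<Rightarrow> bool) set"
  assumes gd: "good p n g" "p \<ge> 2"
    and Oo: "\<And>j i. openin Ytop (Op j i)"
    and CG: "\<And>j x. x \<in> (\<Inter>i. Op j i) \<Longrightarrow> Phi p n g x \<in> NH p"
    and fs: "fincol M s"
  shows "\<exists>M' s'. M < M' \<and> agree M s s' \<and> fincol M' s' \<and> (\<forall>x. agree M' s' x \<longrightarrow> x \<notin> (\<Inter>i. Op j i))"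
proof (rule ccontr)
  assume "\<not> ?thesis"
  then have H: "\<And>M' s'. M < M' \<Longrightarrow> agree M s s' \<Longrightarrow> fincol M' s' \<Longrightarrow> (\<exists>x. agree M' s' x \<and> x \<in> (\<Inter>i. Op j i))"
    by blast
  define G where "G = (\<Inter>i. Op j i)"
  define \<psi> where "\<psi> z = (\<lambda>(m,k). if m < M then s (m,k) else z (m,k))" for z :: "nat \<times> nat \<Rightarrow> bool"
  have dense: "\<exists>z\<in>V. \<psi> z \<in> G" if V: "openin Ytop V" "V \<noteq> {}" for V
  proof -
    obtain z0 where z0: "z0 \<in> V" using V(2) by blast
    obtain F where F: "finite F" "\<And>z. (\<forall>i\<in>F. z i = z0 i) \<Longrightarrow> z \<in> V"
      using Ytop_open_cyl[OF V(1) z0] by blast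
    define M' where "M' = Suc (M + sum fst F)"
    define s' where "s' = (\<lambda>(m,k). if m < M then s (m,k) else if m < M' \<and> (m,k) \<in> F then z0 (m,k) else False)"
    have MM': "M < M'" by (simp add: M'_def)
    have ag: "agree M s s'" by (simp add: agree_def s'_def)
    have fc: "fincol M' s'"
      unfolding fincol_def
    proof (intro allI impI)
      fix m assume "m < M'"
      show "finite {k. s' (m,k)}"
      proof (cases "m < M")
        case True then show ?thesis using fs by (simp add: fincol_def s'_def)
      next
        case False
        have "{k. s' (m,k)} \<subseteq> snd ` F"
        proof
          fix k assume "k \<in> {k. s' (m,k)}"
          then have "(m,k) \<in> F" using False by (auto simp: s'_def split: if_splits)
          then show "k \<in> snd ` F" by force
        qed
        then show ?thesis using F(1) finite_subset by blast
      qed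
    qed
    obtain x where x: "agree M' s' x" "x \<in> G" using H[OF MM' ag fc] unfolding G_def by blast
    define z' where "z' = (\<lambda>(m,k). if m < M then z0 (m,k) else x (m,k))"
    have fstle: "fst i < M'" if "i \<in> F" for i
      using member_le_sum[of i F fst] that F(1) by (simp add: M'_def)
    have "z' i = z0 i" if "i \<in> F" for i
    proof -
      obtain m k where mk: "i = (m,k)" by fastforce
      have mM': "m < M'" using fstle[OF that] mk by simp
      show ?thesis
      proof (cases "m < M")
        case True then show ?thesis by (simp add: z'_def mk)
      next
        case False
        then have "x (m,k) = s' (m,k)" using x(1) mM' by (simp add: agree_def)
        also have "\<dots> = z0 (m,k)" using False mM' that mk by (simp add: s'_def)
        finally show ?thesis using False by (simp add: z'_def mk)
      qed
    qed
    then have "z' \<in> V" using F(2) by blast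
    moreover have "\<psi> z' = x"
    proof (rule ext)
      fix i :: "nat \<times> nat"
      obtain m k where mk: "i = (m,k)" by fastforce
      show "\<psi> z' i = x i"
      proof (cases "m < M")
        case True
        then have "x (m,k) = s' (m,k)" using x(1) MM' by (simp add: agree_def)
        then show ?thesis using True by (simp add: \<psi>_def s'_def mk)
      next
        case False then show ?thesis by (simp add: \<psi>_def z'_def mk)
      qed
    qed
    ultimately show ?thesis using x(2) by blast
  qed
  define tM where "tM = 1 / (of_nat p :: rat) ^ Suc M"
  define K where "K = {y. \<exists>x. agree M s x \<and> (\<lambda>k. x (M,k)) = y \<and> Phi p n g x tM \<in> range (kappa p)}"
  have Kc: "countable K" unfolding K_def tM_def using K_countable[OF gd] by blast
  define W where "W y = {z :: nat \<times> nat \<Rightarrow> bool. (\<lambda>k. z (M,k)) \<noteq> y}" for y :: "nat \<Rightarrow> bool"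
  define \<G> where "\<G> = range (\<lambda>i. \<psi> -` Op j i) \<union> W ` K"
  have "\<Inter>\<G> \<noteq> {}"
  proof (rule Ytop_Baire)
    show "countable \<G>" unfolding \<G>_def using Kc by blast
  next
    fix T assume "T \<in> \<G>"
    then consider i where "T = \<psi> -` Op j i" | y where "T = W y" unfolding \<G>_def by blast
    then show "openin Ytop T"
    proof cases
      case 1
      show ?thesis unfolding 1
      proof (rule Ytop_open_local)
        fix z0 assume "z0 \<in> \<psi> -` Op j i"
        then have "\<psi> z0 \<in> Op j i" by simp
        then obtain F where F: "finite F" "\<forall>z. (\<forall>i\<in>F. z i = \<psi> z0 i) \<longrightarrow> z \<in> Op j i"
          using Ytop_open_cyl[OF Oo] by blast
        have "z \<in> \<psi> -` Op j i" if "\<forall>i\<in>F. z i = z0 i" for z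
        proof -
          have "\<forall>i\<in>F. \<psi> z i = \<psi> z0 i" using that by (auto simp: \<psi>_def)
          then show ?thesis using F(2) by simp
        qed
        then show "\<exists>F. finite F \<and> (\<forall>z. (\<forall>i\<in>F. z i = z0 i) \<longrightarrow> z \<in> \<psi> -` Op j i)" using F(1) by blast
      qed
    next
      case 2
      show ?thesis unfolding 2
      proof (rule Ytop_open_local)
        fix z0 assume "z0 \<in> W y"
        then obtain k where k: "z0 (M,k) \<noteq> y k" by (auto simp: W_def)
        have "z \<in> W y" if "\<forall>i\<in>{(M,k)}. z i = z0 i" for z
        proof -
          have "z (M,k) \<noteq> y k" using that k by simp
          then show ?thesis unfolding W_def by (metis (mono_tags) mem_Collect_eq)
        qed
        then show "\<exists>F. finite F \<and> (\<forall>z. (\<forall>i\<in>F. z i = z0 i) \<longrightarrow> z \<in> W y)"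
          by (intro exI[of _ "{(M,k)}"]) blast
      qed
    qed
  next
    fix T V assume T: "T \<in> \<G>" and V: "openin Ytop V" "V \<noteq> {}"
    from T consider i where "T = \<psi> -` Op j i" | y where "T = W y" unfolding \<G>_def by blast
    then show "T \<inter> V \<noteq> {}"
    proof cases
      case 1
      obtain z where "z \<in> V" "\<psi> z \<in> G" using dense[OF V] by blast
      then show ?thesis using 1 by (auto simp: G_def)
    next
      case 2
      obtain z0 where z0: "z0 \<in> V" using V(2) by blast
      obtain F where F: "finite F" "\<And>z. (\<forall>i\<in>F. z i = z0 i) \<Longrightarrow> z \<in> V"
        using Ytop_open_cyl[OF V(1) z0] by blast
      define k1 where "k1 = Suc (sum snd F)"
      have nF: "(M,k1) \<notin> F"
      proof
        assume "(M,k1) \<in> F"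
        then have "snd (M,k1) \<le> sum snd F" using member_le_sum[of "(M,k1)" F snd] F(1) by blast
        then show False by (simp add: k1_def)
      qed
      define z' where "z' = z0((M,k1) := \<not> y k1)"
      have "\<forall>i\<in>F. z' i = z0 i" using nF by (auto simp: z'_def)
      then have "z' \<in> V" using F(2) by blast
      moreover have "z' \<in> W y"
      proof -
        have "z' (M,k1) \<noteq> y k1" by (simp add: z'_def)
        then show ?thesis unfolding W_def by (metis (mono_tags) mem_Collect_eq)
      qed
      ultimately show ?thesis using 2 by blast
    qed
  qed
  then obtain z where z: "z \<in> \<Inter>\<G>" by blast
  then have "\<psi> z \<in> Op j i" for i unfolding \<G>_def by blast
  then have "\<psi> z \<in> (\<Inter>i. Op j i)" by blast
  then have "Phi p n g (\<psi> z) \<in> NH p" by (rule CG)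
  moreover have "tM \<in> prufer p" unfolding tM_def using tM_prufer gd(2) by blast
  ultimately have "Phi p n g (\<psi> z) tM \<in> range (kappa p)" by (simp add: NH_def)
  moreover have "agree M s (\<psi> z)" by (simp add: agree_def \<psi>_def)
  moreover have "(\<lambda>k. \<psi> z (M,k)) = (\<lambda>k. z (M,k))" by (simp add: \<psi>_def)
  ultimately have "(\<lambda>k. z (M,k)) \<in> K" unfolding K_def by auto
  then have "z \<in> W (\<lambda>k. z (M,k))" using z unfolding \<G>_def by blast
  then show False by (simp add: W_def)
qed

lemma agree_trans: "agree M s s' \<Longrightarrow> agree M' s' s'' \<Longrightarrow> M \<le> M' \<Longrightarrow> agree M s s''"
  unfolding agree_def by auto

lemma lower_bound:
  fixes g :: "nat \<Rightarrow> 'a::{ab_group_add,countable}"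
  assumes gd: "good p n g" "p \<ge> 2"
  shows "{x \<in> topspace Ytop. Phi p n g x \<in> NH p} \<notin> borel_sigma Ytop 3"
proof
  have p0: "p > 0" using gd(2) by simp
  assume "{x \<in> topspace Ytop. Phi p n g x \<in> NH p} \<in> borel_sigma Ytop 3"
  then have "{x \<in> topspace Ytop. Phi p n g x \<in> NH p} \<in> borel_sigma Ytop (Suc (Suc (Suc 0)))"
    by (simp only: numeral_3_eq_3)
  then obtain F :: "nat \<Rightarrow> (nat \<times> nat \<Rightarrow> bool) set" where
      F: "{x \<in> topspace Ytop. Phi p n g x \<in> NH p} = \<Union>(range F)"
      "\<forall>j. \<exists>S\<in>borel_sigma Ytop (Suc (Suc 0)). F j = topspace Ytop - S"
    using sigma_SS_elim[OF \<open>_ \<in> borel_sigma Ytop (Suc (Suc (Suc 0)))\<close>] by blast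
  then obtain Sf where Sf: "\<And>j. Sf j \<in> borel_sigma Ytop (Suc (Suc 0))" "\<And>j. F j = topspace Ytop - Sf j"
    by metis
  have "\<exists>Fj :: nat \<Rightarrow> _. Sf j = \<Union>(range Fj) \<and> (\<forall>i. \<exists>S\<in>borel_sigma Ytop (Suc 0). Fj i = topspace Ytop - S)" for j
    by (rule sigma_SS_elim[OF Sf(1)])
  then obtain Fj :: "nat \<Rightarrow> nat \<Rightarrow> _" where Fj: "\<And>j. Sf j = \<Union>(range (Fj j))"
    "\<And>j i. \<exists>S\<in>borel_sigma Ytop (Suc 0). Fj j i = topspace Ytop - S" by metis
  then have "\<forall>j i. \<exists>S. openin Ytop S \<and> Fj j i = topspace Ytop - S" by simp
  then obtain Op :: "nat \<Rightarrow> nat \<Rightarrow> _" where Op: "\<And>j i. openin Ytop (Op j i)" "\<And>j i. Fj j i = topspace Ytop - Op j i"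
    by metis
  have Geq: "F j = (\<Inter>i. Op j i)" for j using Sf(2) Fj(1) Op(2) by auto
  have CG: "Phi p n g x \<in> NH p" if "x \<in> (\<Inter>i. Op j i)" for j x
  proof -
    have "x \<in> \<Union>(range F)" using that Geq by blast
    then show ?thesis using F(1) by blast
  qed
  define Pr where "Pr j M s q \<longleftrightarrow> M < fst q \<and> agree M s (snd q) \<and> fincol (fst q) (snd q)
      \<and> (\<forall>x. agree (fst q) (snd q) x \<longrightarrow> x \<notin> (\<Inter>i. Op j i))"
    for j M and s :: "nat \<times> nat \<Rightarrow> bool" and q :: "nat \<times> (nat \<times> nat \<Rightarrow> bool)"
  define stepf where "stepf j M s = (SOME q. Pr j M s q)" for j M s
  have stp: "Pr j M s (stepf j M s)" if fc: "fincol M s" for j M s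
  proof -
    have ex: "\<exists>M' s'. M < M' \<and> agree M s s' \<and> fincol M' s' \<and> (\<forall>x. agree M' s' x \<longrightarrow> x \<notin> (\<Inter>i. Op j i))"
      by (rule avoid[OF gd Op(1) CG fc])
    have "\<exists>q. Pr j M s q"
    proof -
      from ex obtain M' s' where H: "M < M'" "agree M s s'" "fincol M' s'"
        "\<forall>x. agree M' s' x \<longrightarrow> x \<notin> (\<Inter>i. Op j i)" by blast
      have "Pr j M s (M', s')" unfolding Pr_def fst_conv snd_conv using H by (intro conjI)
      then show ?thesis by (rule exI)
    qed
    then show ?thesis unfolding stepf_def by (rule someI_ex)
  qed
  define st where "st = rec_nat (0::nat, \<lambda>_::nat\<times>nat. False) (\<lambda>j st. stepf j (fst st) (snd st))"
  define Ms where "Ms j = fst (st j)" for j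
  define ss where "ss j = snd (st j)" for j
  have st0: "Ms 0 = 0" "ss 0 = (\<lambda>_. False)" by (simp_all add: Ms_def ss_def st_def)
  have stS: "st (Suc j) = stepf j (Ms j) (ss j)" for j
    by (simp add: Ms_def ss_def st_def)
  have PS: "Pr j (Ms j) (ss j) (st (Suc j))" if "fincol (Ms j) (ss j)" for j
    unfolding stS by (rule stp[OF that])
  have inv: "fincol (Ms j) (ss j)" for j
  proof (induction j)
    case 0 then show ?case by (simp add: st0 fincol_def)
  next
    case (Suc j) then show ?case using PS[OF Suc] by (simp add: Pr_def Ms_def ss_def)
  qed
  have grow: "Ms j < Ms (Suc j)" for j using PS[OF inv[of j]] by (simp add: Pr_def Ms_def ss_def)
  have agS: "agree (Ms j) (ss j) (ss (Suc j))" for j using PS[OF inv[of j]] by (simp add: Pr_def Ms_def ss_def)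
  have avS: "\<forall>x. agree (Ms (Suc j)) (ss (Suc j)) x \<longrightarrow> x \<notin> (\<Inter>i. Op j i)" for j
    using PS[OF inv[of j]] by (simp add: Pr_def Ms_def ss_def)
  have Mge: "j \<le> Ms j" for j
  proof (induction j)
    case 0 then show ?case by simp
  next
    case (Suc j) then show ?case using grow[of j] by simp
  qed
  have ag: "Ms j \<le> Ms j' \<and> agree (Ms j) (ss j) (ss j')" if "j \<le> j'" for j j'
    using that
  proof (induction j' rule: dec_induct)
    case base then show ?case by (simp add: agree_def)
  next
    case (step j')
    then show ?case using grow[of j'] agS[of j'] agree_trans[of "Ms j" "ss j" "ss j'" "Ms j'" "ss (Suc j')"]
      by simp
  qed
  define x where "x = (\<lambda>(m,k). ss (Suc m) (m,k))"
  have xag: "agree (Ms j) (ss j) x" for j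
    unfolding agree_def
  proof (intro allI impI)
    fix m k assume mj: "m < Ms j"
    have mS: "m < Ms (Suc m)" using Mge[of "Suc m"] by simp
    show "x (m,k) = ss j (m,k)"
    proof (cases "Suc m \<le> j")
      case True
      then have "agree (Ms (Suc m)) (ss (Suc m)) (ss j)" using ag by blast
      then show ?thesis using mS by (simp add: agree_def x_def)
    next
      case False
      then have "agree (Ms j) (ss j) (ss (Suc m))" using ag by simp
      then show ?thesis using mj by (simp add: agree_def x_def)
    qed
  qed
  have xfin: "\<forall>m. finite {k. x (m,k)}"
  proof
    fix m
    have mS: "m < Ms (Suc m)" using Mge[of "Suc m"] by simp
    have "{k. x (m,k)} = {k. ss (Suc m) (m,k)}" by (simp add: x_def)
    then show "finite {k. x (m,k)}" using inv[of "Suc m"] mS by (simp add: fincol_def)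
  qed
  have "Phi p n g x \<in> NH p" by (rule fin_in_NH[OF gd(1) p0 xfin])
  then have "x \<in> \<Union>(range F)" using F(1) by auto
  then obtain j where "x \<in> F j" by blast
  then have "x \<in> (\<Inter>i. Op j i)" using Geq by blast
  moreover have "agree (Ms (Suc j)) (ss (Suc j)) x" by (rule xag)
  ultimately show False using avS by blast
qed

theorem lemma4p13:
  fixes p :: nat
  assumes "prime p"
    and "p_group p TYPE('a::{ab_group_add, countable})"
    and "reduced_group TYPE('a)"
    and "\<not> bounded_group TYPE('a)"
  shows "(NH p :: (rat \<Rightarrow> nat \<Rightarrow> 'a set) set) \<in> borel_pi (Htop p) 3
       \<and> (NH p :: (rat \<Rightarrow> nat \<Rightarrow> 'a set) set) \<notin> borel_sigma (Htop p) 3"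
proof
  show "(NH p :: (rat \<Rightarrow> nat \<Rightarrow> 'a set) set) \<in> borel_pi (Htop p) 3" by (rule upper_bound)
  obtain n and g :: "nat \<Rightarrow> 'a" where gd: "good p n g" using good_exists[OF assms] by blast
  have p2: "p \<ge> 2" using assms(1) by (simp add: prime_ge_2_nat)
  have p0: "p > 0" using p2 by simp
  show "(NH p :: (rat \<Rightarrow> nat \<Rightarrow> 'a set) set) \<notin> borel_sigma (Htop p) 3"
  proof
    assume "(NH p :: (rat \<Rightarrow> nat \<Rightarrow> 'a set) set) \<in> borel_sigma (Htop p) 3"
    then have "{x \<in> topspace Ytop. Phi p n g x \<in> NH p} \<in> borel_sigma Ytop 3"
      by (rule borel_sigma_preimage[OF Phi_cont[OF gd p0]])
    then show False using lower_bound[OF gd p2] by blast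
  qed
qed

end
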